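(* Let $\mathcal{A}$ be a unital C*-algebra and let $\mathcal{E}$ be a (left) Hilbert C*-module over $\mathcal{A}$. Let $\{\tau_n\}_{n=1}^\infty$ and $\{\omega_m\}_{m=1}^\infty$ be two modular Parseval frames for $\mathcal{E}$. Then for every $x \in \mathcal{E}$ with $x \neq 0$, \[ \left(\frac{\|\theta_\tau x\|_0+\|\theta_\omega x\|_0}{2}\right)^2\geq \|\theta_\tau x \|_0\, \|\theta_\omega x \|_0 \geq \frac{1}{\sup_{n, m \in \mathbb{N}} \|\langle \tau_n, \omega_m\rangle \|^2}. \]
   Context: A (left) Hilbert C*-module over a unital C*-algebra $\mathcal{A}$ is a left $\mathcal{A}$-module $\mathcal{E}$ with a map $\langle\cdot,\cdot\rangle:\mathcal{E}\times\mathcal{E}\to\mathcal{A}$ such that: $\langle x,x\rangle\ge 0$ for all $x$, and $\langle x,x\rangle=0$ implies $x=0$; $\langle x+y,z\rangle=\langle x,z\rangle+\langle y,z\rangle$; $\langle ax,y\rangle=a\langle x,y\rangle$ for $a\in\mathcal{A}$; $\langle x,y\rangle=\langle y,x\rangle^*$; and $\mathcal{E}$ is complete for the norm $\|x\|=\sqrt{\|\langle x,x\rangle\|}$. A collection $\{\tau_n\}_{n=1}^\infty\subseteq\mathcal{E}$ is a modular Parseval frame for $\mathcal{E}$ if $\langle x,x\rangle=\sum_{n=1}^\infty\langle x,\tau_n\rangle\langle\tau_n,x\rangle$ (convergent in $\mathcal{A}$) for all $x\in\mathcal{E}$. Let $\ell^2(\mathbb{N},\mathcal{A})$ be the set of sequences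 $\{a_n\}_{n=1}^\infty$ in $\mathcal{A}$ such that $\sum_n a_na_n^*$ converges in $\mathcal{A}$. For a modular Parseval frame $\{\tau_n\}$, the analysis operator is $\theta_\tau:\mathcal{E}\to\ell^2(\mathbb{N},\mathcal{A})$, $\theta_\tau x=\{\langle x,\tau_n\rangle\}_{n=1}^\infty$. For a sequence $\{a_n\}$ in $\mathcal{A}$, $\|\{a_n\}\|_0$ denotes the number of indices $n$ with $a_n\neq 0$ (the cardinality of its support, a value in $\{0,1,2,\dots\}\cup\{\infty\}$). In the right-hand side, $\|\langle \tau_n,\omega_m\rangle\|$ is the C*-algebra norm in $\mathcal{A}$. *)

theory Defs
  imports "HOL-Analysis.Analysis"
begin

text \<open>Unital (complex) C*-algebra. The carrier is a type 'a that is a real Banach algebra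
with unit of norm 1; the complex scalar multiplication smul and the involution star are
explicit parameters.\<close>

definition cstar_algebra :: "(complex \<Rightarrow> 'a::{real_normed_algebra_1,banach} \<Rightarrow> 'a) \<Rightarrow> ('a \<Rightarrow> 'a) \<Rightarrow> bool"
  where "cstar_algebra smul star \<longleftrightarrow>
    (\<forall>r a. smul (complex_of_real r) a = r *\<^sub>R a) \<and>
    (\<forall>c d a. smul (c + d) a = smul c a + smul d a) \<and>
    (\<forall>c a b. smul c (a + b) = smul c a + smul c b) \<and>
    (\<forall>c d a. smul (c * d) a = smul c (smul d a)) \<and>
    (\<forall>c a b. smul c (a * b) = smul c a * b) \<and>
    (\<forall>c a b. smul c (a * b) = a * smul c b) \<and>
    (\<forall>c a. norm (smul c a) = cmod c * norm a) \<and>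
    (\<forall>a. star (star a) = a) \<and>
    (\<forall>a b. star (a + b) = star a + star b) \<and>
    (\<forall>a b. star (a * b) = star b * star a) \<and>
    (\<forall>c a. star (smul c a) = smul (cnj c) (star a)) \<and>
    (\<forall>a. norm (star a * a) = (norm a)\<^sup>2)"

definition spectrum :: "(complex \<Rightarrow> 'a \<Rightarrow> 'a) \<Rightarrow> 'a::ring_1 \<Rightarrow> complex set"
  where "spectrum smul a =
    {z. \<not> (\<exists>b. b * (a - smul z 1) = 1 \<and> (a - smul z 1) * b = 1)}"

definition positive :: "(complex \<Rightarrow> 'a \<Rightarrow> 'a) \<Rightarrow> ('a \<Rightarrow> 'a) \<Rightarrow> 'a::ring_1 \<Rightarrow> bool"
  where "positive smul star a \<longleftrightarrow>
    star a = a \<and> spectrum smul a \<subseteq> complex_of_real ` {0..}"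

definition hm_norm :: "('e \<Rightarrow> 'e \<Rightarrow> 'a::real_normed_vector) \<Rightarrow> 'e \<Rightarrow> real"
  where "hm_norm ip x = sqrt (norm (ip x x))"

definition hilbert_cstar_module ::
  "(complex \<Rightarrow> 'a::{real_normed_algebra_1,banach} \<Rightarrow> 'a) \<Rightarrow> ('a \<Rightarrow> 'a) \<Rightarrow> ('a \<Rightarrow> 'e::ab_group_add \<Rightarrow> 'e) \<Rightarrow> ('e \<Rightarrow> 'e \<Rightarrow> 'a) \<Rightarrow> bool"
  where "hilbert_cstar_module smul star act ip \<longleftrightarrow>
    cstar_algebra smul star \<and>
    (\<forall>a b x. act (a + b) x = act a x + act b x) \<and>
    (\<forall>a x y. act a (x + y) = act a x + act a y) \<and>
    (\<forall>a b x. act (a * b) x = act a (act b x)) \<and>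
    (\<forall>x. act 1 x = x) \<and>
    (\<forall>x. positive smul star (ip x x)) \<and>
    (\<forall>x. ip x x = 0 \<longrightarrow> x = 0) \<and>
    (\<forall>x y z. ip (x + y) z = ip x z + ip y z) \<and>
    (\<forall>a x y. ip (act a x) y = a * ip x y) \<and>
    (\<forall>x y. ip x y = star (ip y x)) \<and>
    (\<forall>X. (\<forall>e>0. \<exists>N. \<forall>m\<ge>N. \<forall>n\<ge>N. hm_norm ip (X m - X n) < e) \<longrightarrow>
         (\<exists>l. (\<lambda>n. hm_norm ip (X n - l)) \<longlonglongrightarrow> 0))"

text \<open>Modular Parseval frame (indexed by nat, starting at 0).\<close>
definition modular_parseval_frame :: "('e \<Rightarrow> 'e \<Rightarrow> 'a::real_normed_algebra) \<Rightarrow> (nat \<Rightarrow> 'e) \<Rightarrow> bool"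
  where "modular_parseval_frame ip \<tau> \<longleftrightarrow>
    (\<forall>x. (\<lambda>n. ip x (\<tau> n) * ip (\<tau> n) x) sums ip x x)"

definition analysis_op :: "('e \<Rightarrow> 'e \<Rightarrow> 'a) \<Rightarrow> (nat \<Rightarrow> 'e) \<Rightarrow> 'e \<Rightarrow> nat \<Rightarrow> 'a"
  where "analysis_op ip \<tau> x = (\<lambda>n. ip x (\<tau> n))"

definition supp_card :: "(nat \<Rightarrow> 'a::zero) \<Rightarrow> ereal"
  where "supp_card f = (if finite {n. f n \<noteq> 0} then ereal (real (card {n. f n \<noteq> 0})) else \<infinity>)"

end

theory Submission
  imports Defs
begin

definition isinv :: "'a::ring_1 \<Rightarrow> bool" where
  "isinv u \<longleftrightarrow> (\<exists>v. v * u = 1 \<and> u * v = 1)"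

definition ainv :: "'a::ring_1 \<Rightarrow> 'a" where
  "ainv u = (SOME v. v * u = 1 \<and> u * v = 1)"

lemma ainv_props: assumes "isinv u" shows "ainv u * u = 1" "u * ainv u = 1"
proof -
  from assms obtain v where "v * u = 1 \<and> u * v = 1" unfolding isinv_def by blast
  then have "ainv u * u = 1 \<and> u * ainv u = 1" unfolding ainv_def by (rule someI)
  then show "ainv u * u = 1" "u * ainv u = 1" by auto
qed

lemma ainv_unique: assumes "v * u = 1" "u * w = 1" shows "ainv u = v" "w = v"
proof -
  have "w = v" by (metis assms mult.assoc mult_1_left mult_1_right)
  have i: "isinv u" using assms \<open>w = v\<close> unfolding isinv_def by blast
  have "ainv u = ainv u * (u * w)" using assms by simp
  also have "\<dots> = w" by (metis ainv_props(1)[OF i] mult.assoc mult_1_left)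
  finally show "ainv u = v" using \<open>w = v\<close> by simp
  show "w = v" by fact
qed

lemma isinv_mult: assumes "isinv a" "isinv b" shows "isinv (a * b)" "ainv (a*b) = ainv b * ainv a"
proof -
  have 1: "(ainv b * ainv a) * (a * b) = 1"
    by (metis ainv_props assms mult.assoc mult_1_left)
  have 2: "(a * b) * (ainv b * ainv a) = 1"
    by (metis ainv_props assms mult.assoc mult_1_left)
  show "isinv (a*b)" using 1 2 unfolding isinv_def by blast
  show "ainv (a*b) = ainv b * ainv a" using ainv_unique(1)[OF 1 2] .
qed

lemma isinv_one[simp]: "isinv (1::'a::ring_1)" unfolding isinv_def by auto

lemma isinv_ainv: assumes "isinv u" shows "isinv (ainv u)" "ainv (ainv u) = u"
  using ainv_props[OF assms] ainv_unique[of u "ainv u"] unfolding isinv_def by auto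

lemma ainv_commute: assumes "isinv u" "u * x = x * u" shows "ainv u * x = x * ainv u"
proof -
  have "ainv u * x = ainv u * x * (u * ainv u)" using ainv_props[OF assms(1)] by simp
  also have "\<dots> = ainv u * (x * u) * ainv u" by (simp add: mult.assoc)
  also have "\<dots> = ainv u * (u * x) * ainv u" using assms(2) by simp
  also have "\<dots> = x * ainv u" using ainv_props[OF assms(1)] by (simp add: mult.assoc[symmetric])
  finally show ?thesis .
qed

lemma isinv_neg: assumes "isinv u" shows "isinv (- u)"
  using assms unfolding isinv_def by (metis minus_mult_minus)


lemma neumann:
  fixes d :: "'a::{real_normed_algebra_1,banach}"
  assumes nd: "norm d < 1"
  shows "isinv (1 - d)" "norm (ainv (1 - d) - 1) \<le> norm d / (1 - norm d)"
proof -
  have sg: "summable (\<lambda>k. norm d ^ k)" using nd by (simp add: summable_geometric)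
  have sm: "summable (\<lambda>k. d ^ k)"
    by (rule summable_comparison_test[OF _ sg]) (auto simp: norm_power_ineq)
  define v where "v = (\<Sum>k. d ^ k)"
  have sh: "(\<Sum>k. d ^ Suc k) = v - 1" unfolding v_def using suminf_split_head[OF sm] by simp
  have l: "d * v = v - 1"
    using suminf_mult[OF sm, of d] sh unfolding v_def by simp
  have r: "v * d = v - 1"
    using suminf_mult2[OF sm, of d] sh unfolding v_def by (simp add: power_commutes)
  have a: "v * (1 - d) = 1" using r by (simp add: algebra_simps)
  have b: "(1 - d) * v = 1" using l by (simp add: algebra_simps)
  show "isinv (1 - d)" using a b unfolding isinv_def by blast
  have av: "ainv (1 - d) = v" using ainv_unique(1)[OF a b] .
  have sm1: "summable (\<lambda>k. d ^ Suc k)" using sm summable_Suc_iff by blast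
  have sg1: "summable (\<lambda>k. norm d ^ Suc k)" using sg summable_Suc_iff by blast
  have "norm (v - 1) = norm (\<Sum>k. d ^ Suc k)" using sh by simp
  also have "\<dots> \<le> (\<Sum>k. norm d ^ Suc k)"
    by (rule norm_suminf_le[OF _ sg1]) (simp add: norm_power_ineq del: power_Suc)
  also have "\<dots> = norm d * (\<Sum>k. norm d ^ k)" using suminf_mult[OF sg, of "norm d"] by simp
  also have "\<dots> = norm d / (1 - norm d)" using nd by (simp add: suminf_geometric divide_inverse)
  finally show "norm (ainv (1 - d) - 1) \<le> norm d / (1 - norm d)" using av by simp
qed


lemma inv_perturb:
  fixes u w :: "'a::{real_normed_algebra_1,banach}"
  assumes iu: "isinv u" and sm: "norm (w - u) * norm (ainv u) \<le> 1/2"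
  shows "isinv w" "norm (ainv w - ainv u) \<le> 2 * norm (ainv u) ^ 2 * norm (w - u)"
proof -
  define d where "d = ainv u * (u - w)"
  have nd: "norm d \<le> 1/2"
  proof -
    have "norm d \<le> norm (ainv u) * norm (u - w)" unfolding d_def by (rule norm_mult_ineq)
    also have "\<dots> = norm (w - u) * norm (ainv u)" by (simp add: norm_minus_commute)
    finally show ?thesis using sm by simp
  qed
  then have nd1: "norm d < 1" by simp
  have wu: "w = u * (1 - d)"
  proof -
    have "u * (1 - d) = u - (u * ainv u) * (u - w)" unfolding d_def
      by (simp add: right_diff_distrib mult.assoc)
    also have "\<dots> = w" by (simp add: ainv_props[OF iu])
    finally show ?thesis by simp
  qed
  have i1: "isinv (1 - d)" using neumann(1)[OF nd1] .
  show iw: "isinv w" using wu isinv_mult(1)[OF iu i1] by simp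
  have aw: "ainv w = ainv (1 - d) * ainv u" using wu isinv_mult(2)[OF iu i1] by simp
  have "ainv w - ainv u = (ainv (1 - d) - 1) * ainv u" using aw by (simp add: algebra_simps)
  then have "norm (ainv w - ainv u) \<le> norm (ainv (1 - d) - 1) * norm (ainv u)"
    by (simp add: norm_mult_ineq)
  also have "\<dots> \<le> (norm d / (1 - norm d)) * norm (ainv u)"
    by (rule mult_right_mono[OF neumann(2)[OF nd1]]) simp
  also have "\<dots> \<le> (2 * norm d) * norm (ainv u)"
  proof (rule mult_right_mono)
    show "norm d / (1 - norm d) \<le> 2 * norm d" using nd
      proof -
      have "norm d \<le> 2 * norm d * (1 - norm d)" using nd norm_ge_zero[of d]
        by (simp add: algebra_simps) (smt (verit) mult_left_le norm_ge_zero)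
      then show ?thesis using nd by (simp add: pos_divide_le_eq)
    qed
  qed simp
  also have "\<dots> \<le> 2 * (norm (ainv u) * norm (w - u)) * norm (ainv u)"
  proof -
    have "norm d \<le> norm (ainv u) * norm (u - w)" unfolding d_def by (rule norm_mult_ineq)
    then show ?thesis by (simp add: norm_minus_commute mult_right_mono)
  qed
  also have "\<dots> = 2 * norm (ainv u) ^ 2 * norm (w - u)" by (simp add: power2_eq_square)
  finally show "norm (ainv w - ainv u) \<le> 2 * norm (ainv u) ^ 2 * norm (w - u)" .
qed

lemma inv_cont:
  fixes u :: "'a::{real_normed_algebra_1,banach}"
  assumes iu: "isinv u" and e: "e > 0"
  shows "\<exists>\<delta>>0. \<forall>w. norm (w - u) < \<delta> \<longrightarrow> isinv w \<and> norm (ainv w - ainv u) < e"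
proof -
  define K where "K = norm (ainv u) + 1"
  have K: "K > 0" "norm (ainv u) \<le> K" unfolding K_def by (auto intro: add_nonneg_pos)
  define \<delta> where "\<delta> = min (1 / (2 * K)) (e / (2 * K^2 + 1))"
  have dp: "\<delta> > 0" unfolding \<delta>_def using K e by (simp add: add_nonneg_pos)
  show ?thesis
  proof (intro exI[of _ \<delta>] conjI allI impI dp)
    fix w assume w: "norm (w - u) < \<delta>"
    have a: "norm (w - u) * norm (ainv u) \<le> 1/2"
    proof -
      have "norm (w - u) * norm (ainv u) \<le> \<delta> * K"
        using w K dp by (intro mult_mono) auto
      also have "\<dots> \<le> (1 / (2*K)) * K" using K by (intro mult_right_mono) (auto simp: \<delta>_def)
      finally show ?thesis using K by simp
    qed
    show "isinv w" using inv_perturb(1)[OF iu a] .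
    have "norm (ainv w - ainv u) \<le> 2 * norm (ainv u) ^ 2 * norm (w - u)" using inv_perturb(2)[OF iu a] .
    also have "\<dots> \<le> 2 * K^2 * norm (w - u)"
      using K by (intro mult_right_mono mult_left_mono power_mono) auto
    also have "\<dots> \<le> 2 * K^2 * \<delta>" using w K dp by (intro mult_left_mono) auto
    also have "\<dots> < e"
    proof -
      have "\<delta> \<le> e / (2 * K^2 + 1)" unfolding \<delta>_def by simp
      then have "2 * K^2 * \<delta> \<le> 2 * K^2 * (e / (2 * K^2 + 1))" using K by (intro mult_left_mono) auto
      also have "\<dots> < e"
      proof -
        have p: "2 * K^2 + 1 > 0" by (simp add: add_nonneg_pos)
        have "2 * K^2 * e < e * (2 * K^2 + 1)" using e by (simp add: algebra_simps)
        then show ?thesis using p by (simp add: divide_less_eq mult.commute)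
      qed
      finally show ?thesis .
    qed
    finally show "norm (ainv w - ainv u) < e" .
  qed
qed


locale cstar =
  fixes smul :: "complex \<Rightarrow> 'a::{real_normed_algebra_1,banach} \<Rightarrow> 'a"
    and star :: "'a \<Rightarrow> 'a"
  assumes cs: "cstar_algebra smul star"
begin

lemma sm_real: "smul (complex_of_real r) a = r *\<^sub>R a" using cs[unfolded cstar_algebra_def, THEN conjunct1] by blast
lemma sm_add1: "smul (c + d) a = smul c a + smul d a" using cs[unfolded cstar_algebra_def, THEN conjunct2, THEN conjunct1] by blast
lemma sm_add2: "smul c (a + b) = smul c a + smul c b" using cs[unfolded cstar_algebra_def, THEN conjunct2, THEN conjunct2, THEN conjunct1] by blast
lemma sm_mult: "smul (c * d) a = smul c (smul d a)" using cs[unfolded cstar_algebra_def, THEN conjunct2, THEN conjunct2, THEN conjunct2, THEN conjunct1] by blast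
lemma sm_mult1: "smul c (a * b) = smul c a * b" using cs[unfolded cstar_algebra_def, THEN conjunct2, THEN conjunct2, THEN conjunct2, THEN conjunct2, THEN conjunct1] by blast
lemma sm_mult2: "smul c (a * b) = a * smul c b" using cs[unfolded cstar_algebra_def, THEN conjunct2, THEN conjunct2, THEN conjunct2, THEN conjunct2, THEN conjunct2, THEN conjunct1] by blast
lemma sm_norm: "norm (smul c a) = cmod c * norm a" using cs[unfolded cstar_algebra_def, THEN conjunct2, THEN conjunct2, THEN conjunct2, THEN conjunct2, THEN conjunct2, THEN conjunct2, THEN conjunct1] by blast
lemma st_inv[simp]: "star (star a) = a" using cs[unfolded cstar_algebra_def, THEN conjunct2, THEN conjunct2, THEN conjunct2, THEN conjunct2, THEN conjunct2, THEN conjunct2, THEN conjunct2, THEN conjunct1] by blast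
lemma st_add: "star (a + b) = star a + star b" using cs[unfolded cstar_algebra_def, THEN conjunct2, THEN conjunct2, THEN conjunct2, THEN conjunct2, THEN conjunct2, THEN conjunct2, THEN conjunct2, THEN conjunct2, THEN conjunct1] by blast
lemma st_mult: "star (a * b) = star b * star a" using cs[unfolded cstar_algebra_def, THEN conjunct2, THEN conjunct2, THEN conjunct2, THEN conjunct2, THEN conjunct2, THEN conjunct2, THEN conjunct2, THEN conjunct2, THEN conjunct2, THEN conjunct1] by blast
lemma st_smul: "star (smul c a) = smul (cnj c) (star a)" using cs[unfolded cstar_algebra_def, THEN conjunct2, THEN conjunct2, THEN conjunct2, THEN conjunct2, THEN conjunct2, THEN conjunct2, THEN conjunct2, THEN conjunct2, THEN conjunct2, THEN conjunct2, THEN conjunct1] by blast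
lemma cstar_id: "norm (star a * a) = (norm a)\<^sup>2" using cs[unfolded cstar_algebra_def, THEN conjunct2, THEN conjunct2, THEN conjunct2, THEN conjunct2, THEN conjunct2, THEN conjunct2, THEN conjunct2, THEN conjunct2, THEN conjunct2, THEN conjunct2, THEN conjunct2] by blast

definition sc :: "complex \<Rightarrow> 'a" where "sc c = smul c 1"

lemma smul_sc: "smul c a = sc c * a" unfolding sc_def using sm_mult1[of c 1 a] by simp
lemma sc_comm: "sc c * a = a * sc c" unfolding sc_def using sm_mult1[of c 1 a] sm_mult2[of c a 1] by simp
lemma sc_of_real: "sc (complex_of_real r) = of_real r" unfolding sc_def sm_real by (simp add: of_real_def)
lemma sc_0[simp]: "sc 0 = 0" using sc_of_real[of 0] by simp
lemma sc_1[simp]: "sc 1 = 1" using sc_of_real[of 1] by simp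
lemma sc_add: "sc (c + d) = sc c + sc d" unfolding sc_def by (rule sm_add1)
lemma sc_mult: "sc (c * d) = sc c * sc d"
proof -
  have "sc (c * d) = smul c (sc d)" unfolding sc_def by (rule sm_mult)
  then show ?thesis by (simp only: smul_sc)
qed
lemma sc_minus: "sc (- c) = - sc c"
proof -
  have "sc c + sc (-c) = 0" using sc_add[of c "-c"] by simp
  then show ?thesis by (simp add: eq_neg_iff_add_eq_0 add.commute)
qed
lemma sc_diff: "sc (c - d) = sc c - sc d" using sc_add[of c "-d"] sc_minus[of d] by simp
lemma norm_sc: "norm (sc c) = cmod c" unfolding sc_def sm_norm by simp
lemma sc_numeral: "sc (numeral n) = numeral n" using sc_of_real[of "numeral n"] by simp

lemma st_0[simp]: "star 0 = 0"
  using st_add[of 0 0] by simp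
lemma st_minus: "star (- a) = - star a"
proof -
  have "star a + star (-a) = 0" using st_add[of a "-a"] by simp
  then show ?thesis by (simp add: eq_neg_iff_add_eq_0 add.commute)
qed
lemma st_diff: "star (a - b) = star a - star b"
  using st_add[of a "-b"] st_minus[of b] by simp
lemma st_1[simp]: "star 1 = 1"
  using st_mult[of "star 1" 1] by simp
lemma st_sc: "star (sc c) = sc (cnj c)" unfolding sc_def st_smul by simp
lemma st_sum: "star (sum f A) = sum (\<lambda>i. star (f i)) A"
  by (induction A rule: infinite_finite_induct) (auto simp: st_add)

lemma norm_star[simp]: "norm (star a) = norm a"
proof -
  have le: "norm b \<le> norm (star b)" for b
  proof (cases "b = 0")
    case False
    have "(norm b)^2 \<le> norm (star b) * norm b" using cstar_id[of b] norm_mult_ineq[of "star b" b] by simp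
    then show ?thesis using False by (simp add: power2_eq_square)
  qed simp
  show ?thesis using le[of a] le[of "star a"] by simp
qed

lemma cstar_id2: "norm (a * star a) = (norm a)\<^sup>2"
  using cstar_id[of "star a"] by simp

lemma st_power: "star (a ^ n) = (star a) ^ n"
  by (induction n) (auto simp: st_mult power_commutes)

lemma sa_pow2: assumes "star h = h" shows "norm (h ^ (2 ^ j)) = norm h ^ (2 ^ j)"
proof (induction j)
  case (Suc j)
  let ?k = "h ^ (2 ^ j)"
  have sk: "star ?k = ?k" using assms by (simp add: st_power)
  have "h ^ (2 ^ Suc j) = star ?k * ?k" using sk by (simp add: power_mult[symmetric] power2_eq_square power_add mult_2)
  then have "norm (h ^ (2 ^ Suc j)) = (norm ?k)^2" using cstar_id by simp
  then show ?case using Suc by (simp add: power_mult[symmetric] mult.commute)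
qed simp

lemma isinv_sc: "c \<noteq> 0 \<Longrightarrow> isinv (sc c)"
proof -
  assume c: "c \<noteq> 0"
  have "sc (1/c) * sc c = 1" "sc c * sc (1/c) = 1" using c by (simp_all add: sc_mult[symmetric])
  then show ?thesis unfolding isinv_def by blast
qed

lemma isinv_sc_mult: assumes "c \<noteq> 0" shows "isinv (sc c * b) \<longleftrightarrow> isinv b"
proof
  assume "isinv b" then show "isinv (sc c * b)" using isinv_mult(1)[OF isinv_sc[OF assms]] by blast
next
  assume "isinv (sc c * b)"
  moreover have "b = sc (1/c) * (sc c * b)"
  proof -
    have "sc (1/c) * (sc c * b) = (sc (1/c) * sc c) * b" by (simp add: mult.assoc)
    also have "sc (1/c) * sc c = 1" using assms by (simp add: sc_mult[symmetric])
    finally show ?thesis by simp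
  qed
  moreover have "isinv (sc (1/c))" using assms by (intro isinv_sc) simp
  ultimately show "isinv b" using isinv_mult(1) by metis
qed

lemma mem_sp: "z \<in> spectrum smul a \<longleftrightarrow> \<not> isinv (a - sc z)"
  unfolding spectrum_def isinv_def sc_def by blast

lemma sp_bound: assumes "z \<in> spectrum smul a" shows "cmod z \<le> norm a"
proof (rule ccontr)
  assume "\<not> cmod z \<le> norm a"
  then have lt: "norm a < cmod z" by simp
  then have z0: "z \<noteq> 0" by auto
  have "norm (sc (1/z) * a) \<le> norm (sc (1/z)) * norm a" by (rule norm_mult_ineq)
  also have "\<dots> = norm a / cmod z" by (simp add: norm_sc norm_divide)
  also have "\<dots> < 1" using lt z0 by simp
  finally have "isinv (1 - sc (1/z) * a)" by (rule neumann(1))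
  then have "isinv (sc (-z) * (1 - sc (1/z) * a))" using isinv_sc_mult z0 by simp
  moreover have "sc (-z) * (1 - sc (1/z) * a) = a - sc z"
  proof -
    have "sc (-z) * (sc (1/z) * a) = - a"
      using z0 by (simp add: mult.assoc[symmetric] sc_mult[symmetric] sc_minus)
    then show ?thesis by (simp add: right_diff_distrib sc_minus)
  qed
  ultimately show False using assms mem_sp by simp
qed

lemma sp_shift: "z \<in> spectrum smul (a + sc w) \<longleftrightarrow> z - w \<in> spectrum smul a"
  unfolding mem_sp by (simp add: sc_diff algebra_simps)

lemma sp_scale: assumes "c \<noteq> 0" shows "z \<in> spectrum smul (sc c * a) \<longleftrightarrow> z / c \<in> spectrum smul a"
proof -
  have "sc c * a - sc z = sc c * (a - sc (z / c))"
    using assms by (simp add: right_diff_distrib sc_mult[symmetric])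
  then show ?thesis unfolding mem_sp using isinv_sc_mult[OF assms] by simp
qed

lemma sa_real_sp: assumes sa: "star h = h" and z: "z \<in> spectrum smul h" shows "Im z = 0"
proof (rule ccontr)
  assume nz: "Im z \<noteq> 0"
  define s where "s = ((norm h)^2 + 1) / (2 * Im z)"
  have s2: "2 * Im z * s = (norm h)^2 + 1" unfolding s_def using nz by simp
  define k where "k = h + sc (\<i> * complex_of_real s)"
  have zk: "z + \<i> * complex_of_real s \<in> spectrum smul k" unfolding k_def sp_shift using z by simp
  have sk: "star k = h - sc (\<i> * complex_of_real s)" unfolding k_def by (simp add: st_add sa st_sc sc_minus)
  have "star k * k = h * h + of_real (s^2)"
  proof -
    have "star k * k = (h - sc (\<i> * s)) * (h + sc (\<i> * s))"
      by (simp only: sk) (simp add: k_def)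
    also have "\<dots> = h * h + (h * sc (\<i> * s) - sc (\<i> * s) * h) - sc (\<i> * s) * sc (\<i> * s)"
      by (simp add: algebra_simps)
    also have "h * sc (\<i> * s) - sc (\<i> * s) * h = 0" by (simp add: sc_comm)
    also have "sc (\<i> * s) * sc (\<i> * s) = - of_real (s^2)"
      by (simp add: sc_mult[symmetric] sc_minus[symmetric] power2_eq_square sc_of_real[symmetric])
         (simp add: algebra_simps)
    finally show ?thesis by simp
  qed
  moreover have "norm (of_real (s^2) :: 'a) = s^2" by (simp only: norm_of_real) simp
  ultimately have "(norm k)^2 \<le> (norm h)^2 + s^2"
    using cstar_id[of k] norm_triangle_ineq[of "h*h" "of_real (s^2) :: 'a"] norm_mult_ineq[of h h]
    by (simp add: power2_eq_square del: of_real_mult)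
  moreover have "cmod (z + \<i> * complex_of_real s) \<le> norm k" by (rule sp_bound[OF zk])
  then have "(cmod (z + \<i> * complex_of_real s))^2 \<le> (norm k)^2" by (simp add: power_mono)
  moreover have "(cmod (z + \<i> * complex_of_real s))^2 = (Re z)^2 + (Im z + s)^2"
    by (simp add: cmod_power2)
  ultimately have "(Re z)^2 + (Im z + s)^2 \<le> (norm h)^2 + s^2" by linarith
  then have "(Re z)^2 + (Im z)^2 + 2 * Im z * s \<le> (norm h)^2" by (simp add: power2_eq_square algebra_simps)
  then show False using s2 by (smt (verit) zero_le_power2)
qed

end


context cstar
begin

lemma sc_mult_pow: "(sc c * h) ^ n = sc (c ^ n) * h ^ n"
proof (induction n)
  case (Suc n)
  have "(sc c * h) ^ Suc n = (sc c * h) * (sc (c ^ n) * h ^ n)" using Suc by simp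
  also have "\<dots> = (sc c * sc (c ^ n)) * (h * h ^ n)"
    by (simp add: mult.assoc) (metis mult.assoc sc_comm)
  finally show ?case by (simp add: sc_mult)
qed simp

lemma norm_sc_mult: "norm (sc c * a) = cmod c * norm a"
  using sm_norm[of c a] by (simp add: smul_sc)

lemma half2: "((1::real) / 2) *\<^sub>R (2::'a) = 1"
proof -
  have "(2::'a) = of_real 2" by simp
  then have "((1::real) / 2) *\<^sub>R (2::'a) = of_real ((1/2) * 2)" by (simp only: scaleR_conv_of_real of_real_mult)
  then show ?thesis by simp
qed

lemma half_inv:
  fixes x :: 'a
  assumes i1: "isinv (1 - x)" and i2: "isinv (1 + x)"
  shows "isinv (1 - x ^ 2)" "ainv (1 - x ^ 2) = scaleR (1/2) (ainv (1 - x) + ainv (1 + x))"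
proof -
  have f: "1 - x ^ 2 = (1 - x) * (1 + x)" "1 - x ^ 2 = (1 + x) * (1 - x)"
    by (simp_all add: algebra_simps power2_eq_square)
  show "isinv (1 - x ^ 2)" using isinv_mult(1)[OF i1 i2] f by simp
  let ?a = "ainv (1 - x)" and ?b = "ainv (1 + x)"
  have e1: "(?a + ?b) * (1 - x ^ 2) = 2"
  proof -
    have "(?a + ?b) * (1 - x ^ 2) = ?a * ((1 - x) * (1 + x)) + ?b * ((1 + x) * (1 - x))"
      using f by (simp add: distrib_right)
    also have "\<dots> = (1 + x) + (1 - x)"
      by (simp add: mult.assoc[symmetric] ainv_props[OF i1] ainv_props[OF i2])
    finally show ?thesis by simp
  qed
  have e2: "(1 - x ^ 2) * (?a + ?b) = 2"
  proof -
    have 1: "(1 - x ^ 2) * ?a = (1 + x)" using f(2) by (simp add: mult.assoc ainv_props[OF i1])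
    have 2: "(1 - x ^ 2) * ?b = (1 - x)" using f(1) by (simp add: mult.assoc ainv_props[OF i2])
    show ?thesis by (simp add: distrib_left 1 2)
  qed
  have "scaleR (1/2) (?a + ?b) * (1 - x ^ 2) = 1" "(1 - x ^ 2) * scaleR (1/2) (?a + ?b) = 1"
    using e1 e2 half2 by (simp_all add: scaleR_left_commute)
  from ainv_unique(1)[OF this] show "ainv (1 - x ^ 2) = scaleR (1/2) (ainv (1 - x) + ainv (1 + x))" .
qed

lemma R0:
  assumes h0: "h \<noteq> 0" and pw: "\<And>j. norm (h ^ (2 ^ j)) = norm h ^ (2 ^ j)"
  shows "\<exists>\<mu>. cmod \<mu> = norm h \<and> \<mu> \<in> spectrum smul h"
proof (rule ccontr)
  assume H: "\<not> ?thesis"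
  define N where "N = norm h"
  have N0: "N > 0" using h0 unfolding N_def by simp
  define t where "t = 1 / N"
  have t0: "t > 0" unfolding t_def using N0 by simp
  define S where "S = sphere (0::complex) t"
  have inS: "w \<in> S \<longleftrightarrow> cmod w = t" for w unfolding S_def by simp
  have inv1: "isinv (1 - sc w * h)" if "w \<in> S" for w
  proof -
    have l0: "w \<noteq> 0" using that t0 inS by auto
    have "cmod (1 / w) = N" using that inS t_def N0 by (simp add: norm_divide)
    then have "isinv (h - sc (1 / w))" using H mem_sp N_def by blast
    then have "isinv (sc (- w) * (h - sc (1 / w)))" using isinv_sc_mult l0 by simp
    moreover have "sc (- w) * (h - sc (1 / w)) = 1 - sc w * h"
      using l0 by (simp add: right_diff_distrib sc_mult[symmetric] sc_minus)
    ultimately show ?thesis by simp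
  qed
  define f where "f w = ainv (1 - sc w * h)" for w
  have cont: "continuous_on S f"
    unfolding continuous_on_iff
  proof (intro ballI allI impI)
    fix x e assume x: "x \<in> S" and e: "(e::real) > 0"
    obtain \<delta> where d: "\<delta> > 0" and dd: "\<And>w. norm (w - (1 - sc x * h)) < \<delta> \<Longrightarrow>
        isinv w \<and> norm (ainv w - ainv (1 - sc x * h)) < e"
      using inv_cont[OF inv1[OF x] e] by blast
    show "\<exists>d>0. \<forall>x'\<in>S. dist x' x < d \<longrightarrow> dist (f x') (f x) < e"
    proof (intro exI[of _ "\<delta> / N"] conjI ballI impI)
      show "\<delta> / N > 0" using d N0 by simp
      fix x' assume "x' \<in> S" "dist x' x < \<delta> / N"
      then have "cmod (x - x') * N < \<delta>" using N0 by (simp add: dist_norm norm_minus_commute pos_less_divide_eq)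
      moreover have "(1 - sc x' * h) - (1 - sc x * h) = sc (x - x') * h"
        by (simp add: sc_diff algebra_simps)
      ultimately have "norm ((1 - sc x' * h) - (1 - sc x * h)) < \<delta>"
        by (simp add: norm_sc_mult N_def)
      then show "dist (f x') (f x) < e" using dd unfolding f_def dist_norm by blast
    qed
  qed
  have "uniformly_continuous_on S f"
    by (rule compact_uniformly_continuous[OF cont]) (simp add: S_def)
  then obtain d0 where d0: "d0 > 0" and ud: "\<And>x x'. x \<in> S \<Longrightarrow> x' \<in> S \<Longrightarrow> dist x' x < d0 \<Longrightarrow>
      dist (f x') (f x) < 1/4"
    unfolding uniformly_continuous_on_def by (metis zero_less_divide_1_iff zero_less_numeral)
  define P where "P j \<longleftrightarrow> (\<forall>w\<in>S. isinv (1 - (sc w * h) ^ (2 ^ j))) \<and>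
      (\<forall>w\<in>S. \<forall>w'\<in>S. dist w' w < d0 \<longrightarrow>
         norm (ainv (1 - (sc w' * h) ^ (2 ^ j)) - ainv (1 - (sc w * h) ^ (2 ^ j))) < 1/4)" for j
  define z where "z j = exp (\<i> * complex_of_real (pi / 2 ^ j))" for j :: nat
  have zpow: "z j ^ (2 ^ j) = -1" for j
  proof -
    have "z j ^ (2 ^ j) = exp (of_nat (2 ^ j) * (\<i> * complex_of_real (pi / 2 ^ j)))"
      unfolding z_def by (rule exp_of_nat_mult[symmetric])
    also have "of_nat (2 ^ j) * (\<i> * complex_of_real (pi / 2 ^ j)) = \<i> * pi"
      by simp
    finally show ?thesis by simp
  qed
  have zn: "cmod (z j) = 1" for j unfolding z_def by simp
  have rot: "(sc (w * z j) * h) ^ (2 ^ j) = - ((sc w * h) ^ (2 ^ j))" for w j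
    by (simp add: sc_mult_pow power_mult_distrib zpow sc_minus)
  have Sz: "w * z j \<in> S" if "w \<in> S" for w j using that zn inS by (simp add: norm_mult)
  have Pj: "P j" for j
  proof (induction j)
    case 0
    show ?case unfolding P_def using inv1 ud unfolding f_def dist_norm by simp
  next
    case (Suc j)
    have IH1: "\<And>w. w \<in> S \<Longrightarrow> isinv (1 - (sc w * h) ^ (2 ^ j))" using Suc unfolding P_def by blast
    have IH2: "\<And>w w'. w \<in> S \<Longrightarrow> w' \<in> S \<Longrightarrow> dist w' w < d0 \<Longrightarrow>
         norm (ainv (1 - (sc w' * h) ^ (2 ^ j)) - ainv (1 - (sc w * h) ^ (2 ^ j))) < 1/4"
      using Suc unfolding P_def by blast
    have i2: "isinv (1 + (sc w * h) ^ (2 ^ j))" if "w \<in> S" for w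
      using IH1[OF Sz[OF that, of j]] rot[of w j] by simp
    have sq: "(sc w * h) ^ (2 ^ Suc j) = ((sc w * h) ^ (2 ^ j)) ^ 2" for w
      by (simp add: power_mult[symmetric] mult.commute)
    have A: "ainv (1 - (sc w * h) ^ (2 ^ Suc j)) = scaleR (1/2)
        (ainv (1 - (sc w * h) ^ (2 ^ j)) + ainv (1 - (sc (w * z j) * h) ^ (2 ^ j)))"
      if "w \<in> S" for w
      using half_inv(2)[OF IH1[OF that] i2[OF that]] rot[of w j] sq[of w] by simp
    show ?case unfolding P_def
    proof (intro conjI ballI impI)
      fix w assume l: "w \<in> S"
      show "isinv (1 - (sc w * h) ^ (2 ^ Suc j))"
        using half_inv(1)[OF IH1[OF l] i2[OF l]] sq[of w] by simp
    next
      fix w w' assume l: "w \<in> S" and l': "w' \<in> S" and dl: "dist w' w < d0"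
      have dl2: "dist (w' * z j) (w * z j) < d0"
        using dl by (simp add: dist_norm left_diff_distrib[symmetric] norm_mult zn)
      let ?a = "ainv (1 - (sc w * h) ^ (2 ^ j))" and ?a' = "ainv (1 - (sc w' * h) ^ (2 ^ j))"
      let ?b = "ainv (1 - (sc (w * z j) * h) ^ (2 ^ j))" and ?b' = "ainv (1 - (sc (w' * z j) * h) ^ (2 ^ j))"
      have "ainv (1 - (sc w' * h) ^ (2 ^ Suc j)) - ainv (1 - (sc w * h) ^ (2 ^ Suc j))
          = scaleR (1/2) ((?a' - ?a) + (?b' - ?b))"
        using A[OF l] A[OF l'] by (simp add: algebra_simps)
      also have "norm \<dots> \<le> (1/2) * (norm (?a' - ?a) + norm (?b' - ?b))"
        by (simp add: norm_triangle_ineq)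
      also have "\<dots> < (1/2) * (1/4 + 1/4)"
        using IH2[OF l l' dl] IH2[OF Sz[OF l] Sz[OF l'] dl2] by simp
      finally show "norm (ainv (1 - (sc w' * h) ^ (2 ^ Suc j)) - ainv (1 - (sc w * h) ^ (2 ^ Suc j))) < 1/4"
        by simp
    qed
  qed
  have "(\<lambda>j. \<i> * complex_of_real (pi / 2 ^ j)) \<longlonglongrightarrow> \<i> * complex_of_real 0"
  proof -
    have "(\<lambda>j. pi / 2 ^ j) \<longlonglongrightarrow> 0" by (rule LIMSEQ_divide_realpow_zero) simp
    then show ?thesis by (intro tendsto_intros)
  qed
  then have "z \<longlonglongrightarrow> exp (\<i> * complex_of_real 0)" unfolding z_def by (rule tendsto_exp)
  then have "z \<longlonglongrightarrow> 1" by simp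
  moreover have "d0 / t > 0" using d0 t0 by simp
  ultimately obtain j where j: "dist (z j) 1 < d0 / t"
  proof -
    assume a: "\<And>j. dist (z j) 1 < d0 / t \<Longrightarrow> thesis"
    from \<open>z \<longlonglongrightarrow> 1\<close> \<open>d0 / t > 0\<close> have "eventually (\<lambda>j. dist (z j) 1 < d0 / t) sequentially"
      by (rule tendstoD)
    then obtain M where "\<forall>j\<ge>M. dist (z j) 1 < d0 / t" unfolding eventually_sequentially by blast
    then show thesis using a by blast
  qed
  define x where "x = (sc (complex_of_real t) * h) ^ (2 ^ j)"
  have tS: "complex_of_real t \<in> S" using t0 inS by simp
  have nx: "norm x = 1"
  proof -
    have "norm x = t ^ (2 ^ j) * norm h ^ (2 ^ j)"
      unfolding x_def sc_mult_pow norm_sc_mult by (simp add: pw norm_power abs_of_pos t0)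
    also have "\<dots> = (t * N) ^ (2 ^ j)" by (simp add: N_def power_mult_distrib)
    also have "t * N = 1" unfolding t_def using N0 by simp
    finally show ?thesis by simp
  qed
  have ix: "isinv (1 - x)" using Pj[of j] tS unfolding P_def x_def by blast
  have ix2: "isinv (1 + x)" using Pj[of j] Sz[OF tS, of j] rot[of "complex_of_real t" j]
    unfolding P_def x_def by (metis diff_minus_eq_add)
  have dd: "dist (complex_of_real t * z j) (complex_of_real t) < d0"
  proof -
    have "dist (complex_of_real t * z j) (complex_of_real t) = t * dist (z j) 1"
    proof -
      have "complex_of_real t * z j - complex_of_real t = complex_of_real t * (z j - 1)"
        by (simp add: algebra_simps)
      then show ?thesis using t0 by (simp add: dist_norm norm_mult)
    qed
    also have "\<dots> < t * (d0 / t)" using j t0 by (intro mult_strict_left_mono) auto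
    finally show ?thesis using t0 by simp
  qed
  let ?a = "ainv (1 - x)" and ?b = "ainv (1 + x)"
  have ab: "norm (?b - ?a) < 1/4"
    using Pj[of j] tS Sz[OF tS, of j] dd rot[of "complex_of_real t" j] unfolding P_def x_def
    by (metis diff_minus_eq_add)
  have "(1 - x) * (?a - ?b) * (1 + x) = x + x"
  proof -
    have "(1 - x) * (?a - ?b) * (1 + x) = ((1 - x) * ?a) * (1 + x) - (1 - x) * (?b * (1 + x))"
      by (simp add: algebra_simps)
    also have "\<dots> = (1 + x) - (1 - x)" by (simp add: ainv_props[OF ix] ainv_props[OF ix2])
    finally show ?thesis by simp
  qed
  then have "norm (x + x) \<le> norm (1 - x) * norm (?a - ?b) * norm (1 + x)"
  proof -
    assume e: "(1 - x) * (?a - ?b) * (1 + x) = x + x"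
    have "norm ((1 - x) * (?a - ?b) * (1 + x)) \<le> norm ((1 - x) * (?a - ?b)) * norm (1 + x)"
      by (rule norm_mult_ineq)
    also have "\<dots> \<le> norm (1 - x) * norm (?a - ?b) * norm (1 + x)"
      by (rule mult_right_mono[OF norm_mult_ineq norm_ge_zero])
    finally show ?thesis using e by simp
  qed
  also have "\<dots> \<le> 2 * (1/4) * 2"
  proof (intro mult_mono)
    show "norm (1 - x) \<le> 2" using norm_triangle_ineq4[of 1 x] nx by simp
    show "norm (1 + x) \<le> 2" using norm_triangle_ineq[of 1 x] nx by simp
    show "norm (?a - ?b) \<le> 1/4" using ab by (simp add: norm_minus_commute)
  qed auto
  finally have "norm (x + x) \<le> 1" by simp
  moreover have "norm (x + x) = 2"
  proof -
    have "x + x = (2::real) *\<^sub>R x" by (rule scaleR_2[symmetric])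
    then have "norm (x + x) = 2 * norm x" by (simp only: norm_scaleR)
    then show ?thesis using nx by simp
  qed
  ultimately show False by simp
qed

end


context cstar
begin

abbreviation pos where "pos k \<equiv> positive smul star k"

lemma st_of_real[simp]: "star (of_real r) = of_real r"
  using st_sc[of "complex_of_real r"] by (simp add: sc_of_real)

lemma sa_R0: assumes sa: "star h = h" and h0: "h \<noteq> 0"
  shows "\<exists>\<mu>. \<mu> \<in> spectrum smul h \<and> Im \<mu> = 0 \<and> \<bar>Re \<mu>\<bar> = norm h"
proof -
  obtain \<mu> where m: "cmod \<mu> = norm h" "\<mu> \<in> spectrum smul h"
    using R0[OF h0 sa_pow2[OF sa]] by blast
  have i: "Im \<mu> = 0" using sa_real_sp[OF sa m(2)] .
  then have "cmod \<mu> = \<bar>Re \<mu>\<bar>" by (simp add: cmod_def)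
  then show ?thesis using m i by auto
qed

lemma sp_refl: "z \<in> spectrum smul (of_real t - k) \<longleftrightarrow> complex_of_real t - z \<in> spectrum smul k"
proof -
  have e: "of_real t - k = sc (-1) * k + sc (complex_of_real t)"
    by (simp add: sc_minus sc_of_real)
  have "z \<in> spectrum smul (of_real t - k) \<longleftrightarrow> z - complex_of_real t \<in> spectrum smul (sc (-1) * k)"
    unfolding e sp_shift ..
  also have "\<dots> \<longleftrightarrow> (z - complex_of_real t) / (-1) \<in> spectrum smul k" by (rule sp_scale) simp
  finally show ?thesis by (simp add: minus_diff_eq)
qed

lemma sp_scale_real: assumes "r \<noteq> 0" "z \<in> spectrum smul k" shows "complex_of_real r * z \<in> spectrum smul ((of_real r :: 'a) * k)"
proof -
  have "complex_of_real r * z \<in> spectrum smul (sc (complex_of_real r) * k)"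
    using sp_scale[where c="complex_of_real r" and a=k and z="complex_of_real r * z"] assms by simp
  then show ?thesis by (simp add: sc_of_real)
qed

lemma pos_sp: assumes "pos k" "\<mu> \<in> spectrum smul k"
  shows "Im \<mu> = 0" "Re \<mu> \<ge> 0" "Re \<mu> \<le> norm k"
proof -
  from assms have "\<mu> \<in> complex_of_real ` {0..}" unfolding positive_def by blast
  then obtain r where r: "\<mu> = complex_of_real r" "r \<ge> 0" by auto
  show "Im \<mu> = 0" "Re \<mu> \<ge> 0" using r by auto
  show "Re \<mu> \<le> norm k" using sp_bound[OF assms(2)] r by simp
qed

lemma char1: assumes k: "pos k" and t: "norm k \<le> t" shows "norm (of_real t - k) \<le> t"
proof (cases "of_real t - k = 0")
  case True
  have "0 \<le> t" using t norm_ge_zero[of k] by linarith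
  then show ?thesis using True by simp
next
  case False
  have sk: "star k = k" using k unfolding positive_def by simp
  have sm: "star (of_real t - k) = of_real t - k" by (simp add: st_diff sk)
  obtain \<mu> where m: "\<mu> \<in> spectrum smul (of_real t - k)" "Im \<mu> = 0" "\<bar>Re \<mu>\<bar> = norm (of_real t - k)"
    using sa_R0[OF sm False] by blast
  have "complex_of_real t - \<mu> \<in> spectrum smul k" using m(1) sp_refl by simp
  from pos_sp[OF k this] have "t - Re \<mu> \<ge> 0" "t - Re \<mu> \<le> norm k" by simp_all
  then show ?thesis using m(3) t by linarith
qed

lemma char2: assumes sk: "star k = k" and t: "norm (of_real t - k) \<le> t" shows "pos k"
  unfolding positive_def
proof (intro conjI sk subsetI)
  fix \<mu> assume m: "\<mu> \<in> spectrum smul k"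
  have i: "Im \<mu> = 0" using sa_real_sp[OF sk m] .
  have "complex_of_real t - \<mu> \<in> spectrum smul (of_real t - k)"
    using sp_refl[of "complex_of_real t - \<mu>" t k] m by simp
  from sp_bound[OF this] t have "cmod (complex_of_real t - \<mu>) \<le> t" by simp
  then have "\<bar>t - Re \<mu>\<bar> \<le> t" using i by (simp add: cmod_def)
  then have "Re \<mu> \<ge> 0" by linarith
  then show "\<mu> \<in> complex_of_real ` {0..}" using i
    by (intro image_eqI[of _ _ "Re \<mu>"]) (auto simp: complex_eq_iff)
qed

lemma pos_add: assumes "pos k1" "pos k2" shows "pos (k1 + k2)"
proof (rule char2)
  show "star (k1 + k2) = k1 + k2" using assms unfolding positive_def by (simp add: st_add)
  have "norm (of_real (norm k1 + norm k2) - (k1 + k2)) = norm ((of_real (norm k1) - k1) + (of_real (norm k2) - k2))"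
    by (simp add: algebra_simps)
  also have "\<dots> \<le> norm (of_real (norm k1) - k1) + norm (of_real (norm k2) - k2)" by (rule norm_triangle_ineq)
  also have "\<dots> \<le> norm k1 + norm k2" using char1[OF assms(1) order_refl] char1[OF assms(2) order_refl] by simp
  finally show "norm (of_real (norm k1 + norm k2) - (k1 + k2)) \<le> norm k1 + norm k2" .
qed

lemma pos_upper: assumes U: "pos U" and Uh: "pos (U - h)" and m: "\<mu> \<in> spectrum smul h"
  shows "Im \<mu> = 0" "Re \<mu> \<le> norm U"
proof -
  have sU: "star U = U" using U unfolding positive_def by simp
  have p1: "pos (of_real (norm U) - U)"
    by (rule char2[of _ "norm U"]) (simp_all add: st_diff sU)
  have "pos ((of_real (norm U) - U) + (U - h))" by (rule pos_add[OF p1 Uh])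
  then have p: "pos (of_real (norm U) - h)" by simp
  have "complex_of_real (norm U) - \<mu> \<in> spectrum smul (of_real (norm U) - h)"
    using sp_refl[of "complex_of_real (norm U) - \<mu>" "norm U" h] m by simp
  from pos_sp[OF p this] show "Im \<mu> = 0" "Re \<mu> \<le> norm U" by simp_all
qed

end


locale hmod = cstar smul star
  for smul :: "complex \<Rightarrow> 'a::{real_normed_algebra_1,banach} \<Rightarrow> 'a" and star +
  fixes act :: "'a \<Rightarrow> 'e::ab_group_add \<Rightarrow> 'e" and ip :: "'e \<Rightarrow> 'e \<Rightarrow> 'a"
  assumes hm: "hilbert_cstar_module smul star act ip"
begin

lemma act_add1: "act (a + b) x = act a x + act b x" using hm[unfolded hilbert_cstar_module_def, THEN conjunct2, THEN conjunct1] by blast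
lemma act_add2: "act a (x + y) = act a x + act a y" using hm[unfolded hilbert_cstar_module_def, THEN conjunct2, THEN conjunct2, THEN conjunct1] by blast
lemma act_mult: "act (a * b) x = act a (act b x)" using hm[unfolded hilbert_cstar_module_def, THEN conjunct2, THEN conjunct2, THEN conjunct2, THEN conjunct1] by blast
lemma act_1[simp]: "act 1 x = x" using hm[unfolded hilbert_cstar_module_def, THEN conjunct2, THEN conjunct2, THEN conjunct2, THEN conjunct2, THEN conjunct1] by blast
lemma ip_pos: "pos (ip x x)" using hm[unfolded hilbert_cstar_module_def, THEN conjunct2, THEN conjunct2, THEN conjunct2, THEN conjunct2, THEN conjunct2, THEN conjunct1] by blast
lemma ip_def0: "ip x x = 0 \<Longrightarrow> x = 0" using hm[unfolded hilbert_cstar_module_def, THEN conjunct2, THEN conjunct2, THEN conjunct2, THEN conjunct2, THEN conjunct2, THEN conjunct2, THEN conjunct1] by blast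
lemma ip_add1: "ip (x + y) z = ip x z + ip y z" using hm[unfolded hilbert_cstar_module_def, THEN conjunct2, THEN conjunct2, THEN conjunct2, THEN conjunct2, THEN conjunct2, THEN conjunct2, THEN conjunct2, THEN conjunct1] by blast
lemma ip_act: "ip (act a x) y = a * ip x y" using hm[unfolded hilbert_cstar_module_def, THEN conjunct2, THEN conjunct2, THEN conjunct2, THEN conjunct2, THEN conjunct2, THEN conjunct2, THEN conjunct2, THEN conjunct2, THEN conjunct1] by blast
lemma ip_sym: "ip x y = star (ip y x)" using hm[unfolded hilbert_cstar_module_def, THEN conjunct2, THEN conjunct2, THEN conjunct2, THEN conjunct2, THEN conjunct2, THEN conjunct2, THEN conjunct2, THEN conjunct2, THEN conjunct2, THEN conjunct1] by blast
lemma complete: "(\<forall>e>0. \<exists>N. \<forall>m\<ge>N. \<forall>n\<ge>N. hm_norm ip (X m - X n) < e) \<Longrightarrow>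
         (\<exists>l. (\<lambda>n. hm_norm ip (X n - l)) \<longlonglongrightarrow> 0)"
  using hm[unfolded hilbert_cstar_module_def, THEN conjunct2, THEN conjunct2, THEN conjunct2, THEN conjunct2, THEN conjunct2, THEN conjunct2, THEN conjunct2, THEN conjunct2, THEN conjunct2, THEN conjunct2] by blast

lemma ip_add2: "ip x (y + z) = ip x y + ip x z"
  by (simp add: ip_sym[of x] ip_add1 st_add)
lemma ip_act2: "ip x (act a y) = ip x y * star a"
  by (simp add: ip_sym[of x] ip_act st_mult)
lemma ip_0[simp]: "ip 0 y = 0"
  using ip_add1[of 0 0 y] by simp
lemma ip_0'[simp]: "ip x 0 = 0"
  using ip_add2[of x 0 0] by simp
lemma ip_minus1: "ip (- x) y = - ip x y"
  using ip_add1[of x "-x" y] by (simp add: eq_neg_iff_add_eq_0 add.commute)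
lemma ip_minus2: "ip x (- y) = - ip x y"
  using ip_add2[of x y "-y"] by (simp add: eq_neg_iff_add_eq_0 add.commute)
lemma ip_diff1: "ip (x - y) z = ip x z - ip y z"
  using ip_add1[of x "-y" z] by (simp add: ip_minus1)
lemma ip_diff2: "ip x (y - z) = ip x y - ip x z"
  using ip_add2[of x y "-z"] by (simp add: ip_minus2)
lemma act_0[simp]: "act 0 x = 0"
  using act_add1[of 0 0 x] by simp
lemma act_0'[simp]: "act a 0 = 0"
  using act_add2[of a 0 0] by simp
lemma act_minus: "act (- a) x = - act a x"
  using act_add1[of a "-a" x] by (simp add: eq_neg_iff_add_eq_0 add.commute)
lemma ip_sum1: "ip (sum f A) y = (\<Sum>i\<in>A. ip (f i) y)"
  by (induction A rule: infinite_finite_induct) (auto simp: ip_add1)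

lemma ip_self_sa: "star (ip x x) = ip x x" using ip_sym[of x x] by simp

lemma ip_norm_act: "norm (ip (act b y) (act b y)) \<le> norm b ^ 2 * norm (ip y y)"
proof -
  have "ip (act b y) (act b y) = b * ip y y * star b" by (simp add: ip_act ip_act2 mult.assoc)
  then have "norm (ip (act b y) (act b y)) \<le> norm b * norm (ip y y) * norm (star b)"
    by (metis norm_mult_ineq mult_right_mono norm_ge_zero order_trans)
  then show ?thesis by (simp add: power2_eq_square mult_ac)
qed

lemma st_scaleR: "star (r *\<^sub>R a) = r *\<^sub>R star a"
  using st_smul[of "complex_of_real r" a] by (simp add: sm_real)

lemma sp_scaleR: assumes "r \<noteq> 0" "z \<in> spectrum smul k" shows "complex_of_real r * z \<in> spectrum smul (r *\<^sub>R k)"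
  using sp_scale_real[OF assms] by (simp add: scaleR_conv_of_real)

lemma cs_norm1:
  assumes x1: "norm (ip x x) \<le> 1" and y1: "norm (ip y y) \<le> 1"
  shows "norm (ip x y) \<le> 1"
proof (cases "ip x y = 0")
  case True then show ?thesis by simp
next
  case False
  define a where "a = ip x y"
  define h where "h = a * star a"
  define A where "A = norm a ^ 2"
  have A0: "A > 0" using False unfolding A_def a_def by simp
  have nh: "norm h = A" unfolding h_def A_def by (rule cstar_id2)
  have sh: "star h = h" unfolding h_def by (simp add: st_mult)
  have h0: "h \<noteq> 0" using nh A0 by auto
  obtain \<mu> where m: "\<mu> \<in> spectrum smul h" "Im \<mu> = 0" "\<bar>Re \<mu>\<bar> = A"
    using sa_R0[OF sh h0] nh by auto
  have yx: "ip y x = star a" unfolding a_def by (rule ip_sym)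
  have xy: "ip x y = a" unfolding a_def ..
  define s where "s = 1 / A"
  have s0: "s > 0" using A0 unfolding s_def by simp
  define b where "b = s *\<^sub>R a"
  define w where "w = x - act b y"
  define U where "U = ip x x + ip (act b y) (act b y)"
  have pU: "pos U" unfolding U_def by (intro pos_add ip_pos)
  have e1: "ip x (act b y) = s *\<^sub>R h"
    unfolding ip_act2 b_def st_scaleR xy h_def by simp
  have e2: "ip (act b y) x = s *\<^sub>R h"
    unfolding ip_act b_def yx h_def by simp
  have "ip w w = ip x (x - act b y) - ip (act b y) (x - act b y)"
    unfolding w_def by (rule ip_diff1)
  also have "\<dots> = (ip x x - ip x (act b y)) - (ip (act b y) x - ip (act b y) (act b y))"
    by (simp only: ip_diff2)
  also have "\<dots> = U - (2 * s) *\<^sub>R h" unfolding U_def e1 e2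
    by (simp add: algebra_simps scaleR_2[symmetric] del: scaleR_2)
  finally have pw: "pos (U - (2 * s) *\<^sub>R h)" using ip_pos[of w] by simp
  have nU: "norm U \<le> 1 + s^2 * A"
  proof -
    have "norm U \<le> norm (ip x x) + norm (ip (act b y) (act b y))" unfolding U_def by (rule norm_triangle_ineq)
    also have "norm (ip (act b y) (act b y)) \<le> norm b ^ 2 * norm (ip y y)" by (rule ip_norm_act)
    also have "norm b = s * norm a" unfolding b_def using s0 by simp
    also have "(s * norm a) ^ 2 * norm (ip y y) \<le> (s * norm a)^2 * 1"
      using y1 by (intro mult_left_mono) auto
    finally show ?thesis using x1 unfolding A_def by (simp add: power_mult_distrib)
  qed
  have m2: "complex_of_real (2 * s) * \<mu> \<in> spectrum smul ((2 * s) *\<^sub>R h)"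
    by (rule sp_scaleR) (use s0 m in auto)
  have "Re (complex_of_real (2 * s) * \<mu>) \<le> norm U" by (rule pos_upper(2)[OF pU pw m2])
  then have up: "2 * s * Re \<mu> \<le> 1 + s^2 * A" using nU by simp
  have "2 * s * Re \<mu> * A \<le> (1 + s^2 * A) * A" using up A0 by (intro mult_right_mono) auto
  moreover have "s * A = 1" unfolding s_def using A0 by simp
  ultimately have up': "2 * Re \<mu> \<le> A + 1"
    by (simp add: power2_eq_square algebra_simps) (metis mult.assoc mult.commute mult.left_neutral)
  define u where "u = act a y"
  define V where "V = ip u u + ip x x"
  have pV: "pos V" unfolding V_def by (intro pos_add ip_pos)
  have f1: "ip u x = h" unfolding u_def ip_act yx h_def ..
  have f2: "ip x u = h" unfolding u_def ip_act2 xy h_def ..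
  have "ip (u + x) (u + x) = (ip u u + ip u x) + (ip x u + ip x x)"
    by (simp only: ip_add1 ip_add2 add_ac)
  also have "\<dots> = V - (-2) *\<^sub>R h" unfolding f1 f2 V_def
    by (simp add: algebra_simps scaleR_2[symmetric] del: scaleR_2)
  finally have pv: "pos (V - (-2) *\<^sub>R h)" using ip_pos[of "u + x"] by simp
  have nV: "norm V \<le> A + 1"
  proof -
    have "norm V \<le> norm (ip u u) + norm (ip x x)" unfolding V_def by (rule norm_triangle_ineq)
    also have "norm (ip u u) \<le> norm a ^ 2 * norm (ip y y)" unfolding u_def by (rule ip_norm_act)
    also have "\<dots> \<le> norm a ^ 2 * 1" using y1 by (intro mult_left_mono) auto
    finally show ?thesis using x1 unfolding A_def by simp
  qed
  have m3: "complex_of_real (-2) * \<mu> \<in> spectrum smul ((-2) *\<^sub>R h)"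
    by (rule sp_scaleR) (use m in auto)
  have "Re (complex_of_real (-2) * \<mu>) \<le> norm V" by (rule pos_upper(2)[OF pV pv m3])
  then have lo: "-2 * Re \<mu> \<le> A + 1" using nV by simp
  have "2 * A \<le> A + 1" using up' lo m(3) by linarith
  then have "A \<le> 1" by simp
  then have "norm a ^ 2 \<le> 1 ^ 2" unfolding A_def by simp
  then show ?thesis unfolding a_def by (rule power2_le_imp_le) simp
qed

end


context hmod
begin

abbreviation nx where "nx x \<equiv> hm_norm ip x"

lemma nx_sq: "(nx x)^2 = norm (ip x x)" unfolding hm_norm_def by simp
lemma nx_ge0: "nx x \<ge> 0" unfolding hm_norm_def by simp
lemma nx_0_iff: "nx x = 0 \<longleftrightarrow> x = 0"
  unfolding hm_norm_def using ip_def0[of x] by auto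

lemma ip_act_both: "ip (act c x) (act d y) = c * ip x y * star d"
  by (simp add: ip_act ip_act2 mult.assoc)

lemma st_scaleR1: "star (r *\<^sub>R (1::'a)) = r *\<^sub>R 1" by (simp add: st_scaleR)

lemma ip_scale: "ip (act (r *\<^sub>R 1) x) (act (q *\<^sub>R 1) y) = (r * q) *\<^sub>R ip x y"
  by (simp add: ip_act_both st_scaleR1)

lemma nx_scale: "nx (act (r *\<^sub>R 1) x) = \<bar>r\<bar> * nx x"
  unfolding hm_norm_def ip_scale by (simp add: real_sqrt_mult abs_mult)

lemma cs: "norm (ip x y) \<le> nx x * nx y"
proof (cases "x = 0 \<or> y = 0")
  case True then show ?thesis using nx_ge0 by auto
next
  case False
  then have a0: "nx x > 0" and b0: "nx y > 0" using nx_0_iff nx_ge0 by (auto simp: order_le_less)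
  define x' where "x' = act ((1 / nx x) *\<^sub>R 1) x"
  define y' where "y' = act ((1 / nx y) *\<^sub>R 1) y"
  have "norm (ip x' x') = (1 / nx x)^2 * (nx x)^2" unfolding x'_def ip_scale nx_sq
    by (simp add: power2_eq_square)
  then have 1: "norm (ip x' x') = 1" using a0 by (simp add: power_divide)
  have "norm (ip y' y') = (1 / nx y)^2 * (nx y)^2" unfolding y'_def ip_scale nx_sq
    by (simp add: power2_eq_square)
  then have 2: "norm (ip y' y') = 1" using b0 by (simp add: power_divide)
  have "norm (ip x' x') \<le> 1" "norm (ip y' y') \<le> 1" using 1 2 by simp_all
  then have "norm (ip x' y') \<le> 1" by (rule cs_norm1)
  moreover have "ip x' y' = (1 / nx x * (1 / nx y)) *\<^sub>R ip x y" unfolding x'_def y'_def by (rule ip_scale)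
  moreover have r0: "1 / nx x * (1 / nx y) > 0" using a0 b0 by simp
  ultimately have le: "(1 / nx x * (1 / nx y)) * norm (ip x y) \<le> 1"
    by (simp only: norm_scaleR abs_of_pos)
  have one: "(nx x * nx y) * (1 / nx x * (1 / nx y)) = 1" using a0 b0 by simp
  have "norm (ip x y) = ((nx x * nx y) * (1 / nx x * (1 / nx y))) * norm (ip x y)"
    by (simp only: one mult_1_left)
  also have "\<dots> = (nx x * nx y) * ((1 / nx x * (1 / nx y)) * norm (ip x y))" by (rule mult.assoc)
  also have "\<dots> \<le> (nx x * nx y) * 1" by (rule mult_left_mono[OF le]) (intro mult_nonneg_nonneg nx_ge0)
  finally show ?thesis by simp
qed

lemma ip_norm_sym: "norm (ip x y) = norm (ip y x)"
  using ip_sym[of x y] by simp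

lemma nx_triangle: "nx (x + y) \<le> nx x + nx y"
proof -
  have "ip (x + y) (x + y) = (ip x x + ip x y) + (ip y x + ip y y)"
    by (simp only: ip_add1 ip_add2 add_ac)
  then have "norm (ip (x + y) (x + y)) \<le> norm (ip x x) + norm (ip x y) + (norm (ip y x) + norm (ip y y))"
    by (simp only: order_trans[OF norm_triangle_ineq add_mono[OF norm_triangle_ineq norm_triangle_ineq]])
  also have "\<dots> \<le> (nx x)^2 + nx x * nx y + (nx x * nx y + (nx y)^2)"
  proof -
    have "norm (ip y x) \<le> nx x * nx y" using cs[of y x] by (simp only: mult.commute)
    then show ?thesis using cs[of x y] nx_sq[of x] nx_sq[of y] by linarith
  qed
  also have "\<dots> = (nx x + nx y)^2" by (simp only: power2_sum)
  finally have "(nx (x + y))^2 \<le> (nx x + nx y)^2" by (simp only: nx_sq)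
  moreover have "0 \<le> nx x + nx y" using nx_ge0[of x] nx_ge0[of y] by linarith
  ultimately show ?thesis by (rule power2_le_imp_le)
qed

lemma nx_minus: "nx (- x) = nx x"
  unfolding hm_norm_def by (simp add: ip_minus1 ip_minus2)

lemma nx_commute: "nx (x - y) = nx (y - x)"
  using nx_minus[of "x - y"] by simp

lemma nx_triangle_diff: "nx (x - z) \<le> nx (x - y) + nx (y - z)"
  using nx_triangle[of "x - y" "y - z"] by (simp add: algebra_simps)

end


context hmod
begin

lemma frame_pointwise:
  assumes fr: "modular_parseval_frame ip \<tau>"
  shows "\<exists>B. \<forall>n. norm (ip x (\<tau> n)) \<le> B"
proof -
  have s: "(\<lambda>n. ip x (\<tau> n) * ip (\<tau> n) x) sums ip x x" using fr unfolding modular_parseval_frame_def by blast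
  then have "(\<lambda>n. ip x (\<tau> n) * ip (\<tau> n) x) \<longlonglongrightarrow> 0" using summable_LIMSEQ_zero sums_summable by blast
  then have "(\<lambda>n. norm (ip x (\<tau> n) * ip (\<tau> n) x)) \<longlonglongrightarrow> 0" by (rule tendsto_norm_zero)
  moreover have "norm (ip x (\<tau> n) * ip (\<tau> n) x) = (norm (ip x (\<tau> n)))^2" for n
    using cstar_id2[of "ip x (\<tau> n)"] ip_sym[of "\<tau> n" x] by simp
  ultimately have "(\<lambda>n. (norm (ip x (\<tau> n)))^2) \<longlonglongrightarrow> 0" by simp
  then have "Bseq (\<lambda>n. (norm (ip x (\<tau> n)))^2)" by (intro convergent_imp_Bseq convergentI)
  then obtain K where K: "\<And>n. norm ((norm (ip x (\<tau> n)))^2) \<le> K" by (metis BseqE)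
  have "norm (ip x (\<tau> n)) \<le> 1 + K" for n
  proof (cases "norm (ip x (\<tau> n)) \<le> 1")
    case True then show ?thesis using K[of n] norm_ge_zero[of "(norm (ip x (\<tau> n)))^2"] by linarith
  next
    case False
    then have "norm (ip x (\<tau> n)) * 1 \<le> norm (ip x (\<tau> n)) * norm (ip x (\<tau> n))"
      by (intro mult_left_mono) auto
    then have "norm (ip x (\<tau> n)) \<le> (norm (ip x (\<tau> n)))^2" by (simp add: power2_eq_square)
    then show ?thesis using K[of n] by simp
  qed
  then show ?thesis by blast
qed

lemma norm_double: "norm (a + a :: 'a) = 2 * norm a"
proof -
  have "a + a = (2::real) *\<^sub>R a" by (rule scaleR_2[symmetric])
  then show ?thesis by (simp only: norm_scaleR)
qed

lemma frame_bounded: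
  assumes fr: "modular_parseval_frame ip \<tau>"
  shows "\<exists>C. \<forall>n. nx (\<tau> n) \<le> C"
proof (rule ccontr)
  assume nb: "\<not> ?thesis"
  have ex: "\<exists>n. nx (\<tau> n) > 2 * (real k + 1) * 3 ^ k" for k
    using nb by (metis not_le)
  define \<nu> where "\<nu> k = (SOME n. nx (\<tau> n) > 2 * (real k + 1) * 3 ^ k)" for k
  have \<nu>: "nx (\<tau> (\<nu> k)) > 2 * (real k + 1) * 3 ^ k" for k
    unfolding \<nu>_def using someI_ex[OF ex[of k]] .
  define T where "T k = \<tau> (\<nu> k)" for k
  define t where "t k = nx (T k)" for k
  have tbig: "t k > 2 * (real k + 1) * 3 ^ k" for k using \<nu> unfolding t_def T_def .
  have t0: "t k > 0" for k
  proof -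
    have "0 < 2 * (real k + 1) * 3 ^ k" by simp
    then show ?thesis using tbig[of k] by linarith
  qed
  define r where "r k = (1/3) ^ k / t k" for k :: nat
  have r0: "r k > 0" for k unfolding r_def using t0[of k] by simp
  define \<xi> where "\<xi> k = act (r k *\<^sub>R 1) (T k)" for k
  have nxi: "nx (\<xi> k) = (1/3) ^ k" for k
    unfolding \<xi>_def nx_scale using r0[of k] t0[of k] by (simp add: r_def t_def)
  have ipxi: "norm (ip (\<xi> k) (T k)) = (1/3) ^ k * t k" for k
  proof -
    have "ip (\<xi> k) (T k) = r k *\<^sub>R ip (T k) (T k)" unfolding \<xi>_def ip_act by simp
    then have "norm (ip (\<xi> k) (T k)) = r k * (t k)^2" using r0[of k] unfolding t_def nx_sq by simp
    then show ?thesis unfolding r_def using t0[of k] by (simp add: power2_eq_square)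
  qed
  define X where "X = rec_nat 0 (\<lambda>k xk. if norm (ip (xk + \<xi> (Suc k)) (T (Suc k))) \<ge> norm (ip (\<xi> (Suc k)) (T (Suc k)))
        then xk + \<xi> (Suc k) else xk - \<xi> (Suc k))"
  have X0: "X 0 = 0" unfolding X_def by simp
  have XS: "X (Suc k) = (if norm (ip (X k + \<xi> (Suc k)) (T (Suc k))) \<ge> norm (ip (\<xi> (Suc k)) (T (Suc k)))
        then X k + \<xi> (Suc k) else X k - \<xi> (Suc k))" for k unfolding X_def by simp
  have sokal: "norm (ip (X (Suc k)) (T (Suc k))) \<ge> (1/3) ^ Suc k * t (Suc k)" for k
  proof -
    let ?x = "X k" and ?\<xi> = "\<xi> (Suc k)" and ?T = "T (Suc k)"
    have "norm (ip (X (Suc k)) ?T) \<ge> norm (ip ?\<xi> ?T)"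
    proof (cases "norm (ip (?x + ?\<xi>) ?T) \<ge> norm (ip ?\<xi> ?T)")
      case True then show ?thesis using XS[of k] by simp
    next
      case False
      have "ip (?x + ?\<xi>) ?T - ip (?x - ?\<xi>) ?T = ip ?\<xi> ?T + ip ?\<xi> ?T"
        by (simp add: ip_add1 ip_diff1)
      then have "2 * norm (ip ?\<xi> ?T) \<le> norm (ip (?x + ?\<xi>) ?T) + norm (ip (?x - ?\<xi>) ?T)"
        using norm_triangle_ineq4[of "ip (?x + ?\<xi>) ?T" "ip (?x - ?\<xi>) ?T"] norm_double by simp
      then have "norm (ip (?x - ?\<xi>) ?T) \<ge> norm (ip ?\<xi> ?T)" using False by linarith
      then show ?thesis using XS[of k] False by simp
    qed
    then show ?thesis using ipxi by simp
  qed
  have step: "nx (X (Suc k) - X k) = (1/3) ^ Suc k" for k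
    using XS[of k] nxi[of "Suc k"] nx_minus[of "\<xi> (Suc k)"] by simp
  have dist: "nx (X (k + d) - X k) \<le> (1/2) * (1/3) ^ k - (1/2) * (1/3) ^ (k + d)" for k d
  proof (induction d)
    case 0 then show ?case by (simp add: hm_norm_def)
  next
    case (Suc d)
    have "nx (X (k + Suc d) - X k) \<le> nx (X (Suc (k + d)) - X (k + d)) + nx (X (k + d) - X k)"
      using nx_triangle_diff[of "X (Suc (k + d))" "X k" "X (k + d)"] by simp
    also have "\<dots> \<le> (1/3) ^ Suc (k + d) + ((1/2) * (1/3) ^ k - (1/2) * (1/3) ^ (k + d))"
      using step[of "k + d"] Suc by simp
    also have "\<dots> = (1/2) * (1/3) ^ k - (1/2) * (1/3) ^ (k + Suc d)" by simp
    finally show ?case .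
  qed
  have distm: "nx (X m - X k) \<le> (1/2) * (1/3) ^ k" if km: "k \<le> m" for k m
  proof -
    obtain d where md: "m = k + d" using le_Suc_ex[OF km] by blast
    have "0 \<le> (1/2::real) * (1/3) ^ (k + d)" by simp
    then have "nx (X (k + d) - X k) \<le> (1/2) * (1/3) ^ k" using dist[of k d] by linarith
    then show ?thesis unfolding md .
  qed
  have cauchy: "\<forall>e>0. \<exists>N. \<forall>m\<ge>N. \<forall>n\<ge>N. nx (X m - X n) < e"
  proof (intro allI impI)
    fix e :: real assume e: "e > 0"
    obtain N where N: "(1/3 :: real) ^ N < e" using real_arch_pow_inv[OF e, of "1/3"] by force
    show "\<exists>N. \<forall>m\<ge>N. \<forall>n\<ge>N. nx (X m - X n) < e"
    proof (intro exI[of _ N] allI impI)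
      fix m n assume m: "m \<ge> N" and n: "n \<ge> N"
      have c: "nx (X m - X n) \<le> nx (X m - X N) + nx (X N - X n)" by (rule nx_triangle_diff)
      have d: "nx (X N - X n) = nx (X n - X N)" by (rule nx_commute)
      show "nx (X m - X n) < e" using c d distm[OF m] distm[OF n] N by linarith
    qed
  qed
  obtain l where l: "(\<lambda>n. nx (X n - l)) \<longlonglongrightarrow> 0" using complete[OF cauchy] by blast
  have lk: "nx (X k - l) \<le> (1/2) * (1/3) ^ k" for k
  proof -
    have "(\<lambda>m. nx (X m - l) + (1/2) * (1/3) ^ k) \<longlonglongrightarrow> 0 + (1/2) * (1/3) ^ k"
      by (intro tendsto_add l tendsto_const)
    moreover have "\<exists>N. \<forall>m\<ge>N. nx (X k - l) \<le> nx (X m - l) + (1/2) * (1/3) ^ k"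
    proof (intro exI[of _ k] allI impI)
      fix m assume m: "m \<ge> k"
      have c: "nx (X k - l) \<le> nx (X k - X m) + nx (X m - l)" by (rule nx_triangle_diff)
      have d: "nx (X k - X m) = nx (X m - X k)" by (rule nx_commute)
      show "nx (X k - l) \<le> nx (X m - l) + (1/2) * (1/3) ^ k" using c d distm[OF m] by linarith
    qed
    ultimately show ?thesis by (intro LIMSEQ_le_const) simp_all
  qed
  obtain B where B: "\<And>n. norm (ip l (\<tau> n)) \<le> B" using frame_pointwise[OF fr, of l] by blast
  obtain k0 :: nat where k0: "real k0 > B" using reals_Archimedean2 by blast
  define k where "k = Suc k0"
  have "ip (X k) (T k) = ip l (T k) + ip (X k - l) (T k)"
    by (simp add: ip_add1[symmetric])
  then have "norm (ip (X k) (T k)) \<le> norm (ip l (T k)) + norm (ip (X k - l) (T k))"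
    by (simp add: norm_triangle_ineq)
  also have "norm (ip (X k - l) (T k)) \<le> nx (X k - l) * t k" unfolding t_def by (rule cs)
  also have "\<dots> \<le> (1/2) * (1/3) ^ k * t k" using lk[of k] t0[of k] by (intro mult_right_mono) auto
  finally have "(1/3) ^ k * t k \<le> norm (ip l (T k)) + (1/2) * (1/3) ^ k * t k"
    using sokal[of k0] unfolding k_def by linarith
  then have h1: "(1/2) * ((1/3) ^ k * t k) \<le> norm (ip l (T k))" by simp
  have g2: "(1/3) ^ k * t k > (1/3) ^ k * (2 * (real k + 1) * 3 ^ k)"
    using tbig[of k] by (intro mult_strict_left_mono) auto
  have g3: "(1/3::real) ^ k * (2 * (real k + 1) * 3 ^ k) = 2 * (real k + 1)"
  proof -
    have o: "(1/3::real) ^ k * 3 ^ k = 1" by (simp add: power_mult_distrib[symmetric])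
    have "(1/3::real) ^ k * (2 * (real k + 1) * 3 ^ k) = (2 * (real k + 1)) * ((1/3) ^ k * 3 ^ k)"
      by (simp only: mult_ac)
    then show ?thesis using o by simp
  qed
  have h2: "2 * (real k + 1) < (1/3) ^ k * t k" using g2 unfolding g3 .
  define Q where "Q = (1/3::real) ^ k * t k"
  have h1': "1/2 * Q \<le> norm (ip l (T k))" using h1 unfolding Q_def by simp
  have h2': "real k + 1 < 1/2 * Q" using h2 unfolding Q_def by simp
  have "real k + 1 < norm (ip l (T k))" by (rule less_le_trans[OF h2' h1'])
  moreover have "norm (ip l (T k)) \<le> B" unfolding T_def by (rule B)
  ultimately show False using k0 unfolding k_def by simp
qed

end


context cstar
begin

lemma sm_1: "smul 1 z = z" using sm_real[of 1 z] by simp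
lemma sm_m1: "smul (-1) z = - z" using sm_real[of "-1" z] by simp
lemma sm_neg: "smul (- c) z = - smul c z" by (simp add: smul_sc sc_minus)

lemma F_expand: "sc c * (A + smul (cnj c) B + smul c C + smul c (smul (cnj c) D))
   = smul c A + smul (c * cnj c) B + smul (c * c) C + smul (c * c * cnj c) D"
  by (simp only: smul_sc[symmetric] sm_add2 sm_mult[symmetric] mult.assoc[symmetric])

lemma pol_alg: "sc 1 * (A + smul (cnj 1) B + smul 1 C + smul 1 (smul (cnj 1) D))
  + sc (-1) * (A + smul (cnj (-1)) B + smul (-1) C + smul (-1) (smul (cnj (-1)) D))
  + sc \<i> * (A + smul (cnj \<i>) B + smul \<i> C + smul \<i> (smul (cnj \<i>) D))
  + sc (-\<i>) * (A + smul (cnj (-\<i>)) B + smul (-\<i>) C + smul (-\<i>) (smul (cnj (-\<i>)) D))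
  = 4 *\<^sub>R B"
proof -
  have e1: "sc 1 * (A + smul (cnj 1) B + smul 1 C + smul 1 (smul (cnj 1) D)) = A + B + C + D"
    using F_expand[of 1] by (simp add: sm_1)
  have e2: "sc (-1) * (A + smul (cnj (-1)) B + smul (-1) C + smul (-1) (smul (cnj (-1)) D)) = - A + B + C - D"
    using F_expand[of "-1"] by (simp add: sm_1 sm_m1)
  have e3: "sc \<i> * (A + smul (cnj \<i>) B + smul \<i> C + smul \<i> (smul (cnj \<i>) D)) = smul \<i> A + B - C + smul \<i> D"
    using F_expand[of "\<i>"] by (simp add: sm_1 sm_m1)
  have e4: "sc (-\<i>) * (A + smul (cnj (-\<i>)) B + smul (-\<i>) C + smul (-\<i>) (smul (cnj (-\<i>)) D)) = - smul \<i> A + B - C - smul \<i> D"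
    using F_expand[of "-\<i>"] by (simp add: sm_1 sm_m1 sm_neg)
  have f: "(4::real) = 1 + 1 + 1 + 1" by simp
  have "4 *\<^sub>R B = B + B + B + B" by (simp only: f scaleR_add_left scaleR_one)
  moreover have "(A + B + C + D) + (- A + B + C - D) + (smul \<i> A + B - C + smul \<i> D)
     + (- smul \<i> A + B - C - smul \<i> D) = B + B + B + B"
    by (simp add: algebra_simps)
  ultimately show ?thesis unfolding e1 e2 e3 e4 by simp
qed

end

context hmod
begin

lemma sc_right: "z * sc d = smul d z" by (simp add: smul_sc sc_comm)

lemma ip_F: "ip (x + act (sc c) y) (x + act (sc c) y)
   = ip x x + smul (cnj c) (ip x y) + smul c (ip y x) + smul c (smul (cnj c) (ip y y))"
proof -
  have 1: "ip x (act (sc c) y) = smul (cnj c) (ip x y)" by (simp only: ip_act2 st_sc sc_right)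
  have 2: "ip (act (sc c) y) x = smul c (ip y x)" by (simp only: ip_act smul_sc)
  have 3: "ip (act (sc c) y) (act (sc c) y) = smul c (smul (cnj c) (ip y y))"
  proof -
    have h3a: "ip (act (sc c) y) (act (sc c) y) = sc c * (ip y y * sc (cnj c))"
      by (simp only: ip_act ip_act2 st_sc mult.assoc)
    show ?thesis unfolding h3a by (simp only: smul_sc sc_comm[of "cnj c"])
  qed
  have "ip (x + act (sc c) y) (x + act (sc c) y)
     = ip x x + ip x (act (sc c) y) + (ip (act (sc c) y) x + ip (act (sc c) y) (act (sc c) y))"
    by (simp only: ip_add1 ip_add2 add_ac)
  then show ?thesis unfolding 1 2 3 by (simp only: add.assoc)
qed

lemma prod_F: "(a + sc c * b) * (a' + b' * sc (cnj c))
   = a * a' + smul (cnj c) (a * b') + smul c (b * a') + smul c (smul (cnj c) (b * b'))"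
proof -
  have "(a + sc c * b) * (a' + b' * sc (cnj c))
     = a * a' + (a * b') * sc (cnj c) + sc c * (b * a') + sc c * ((b * b') * sc (cnj c))"
    by (simp only: distrib_left distrib_right mult.assoc add_ac)
  then show ?thesis by (simp only: sc_right smul_sc)
qed

lemma frame_pol:
  assumes fr: "modular_parseval_frame ip \<tau>"
  shows "(\<lambda>n. ip x (\<tau> n) * ip (\<tau> n) y) sums ip x y"
proof -
  define P where "P c n = ip (x + act (sc c) y) (\<tau> n) * ip (\<tau> n) (x + act (sc c) y)" for c n
  define Q where "Q c = ip (x + act (sc c) y) (x + act (sc c) y)" for c
  have s: "(\<lambda>n. sc c * P c n) sums (sc c * Q c)" for c
    unfolding P_def Q_def using fr unfolding modular_parseval_frame_def by (intro sums_mult) blast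
  have P_eq: "P c n = ip x (\<tau> n) * ip (\<tau> n) x + smul (cnj c) (ip x (\<tau> n) * ip (\<tau> n) y)
      + smul c (ip y (\<tau> n) * ip (\<tau> n) x) + smul c (smul (cnj c) (ip y (\<tau> n) * ip (\<tau> n) y))" for c n
  proof -
    have "P c n = (ip x (\<tau> n) + sc c * ip y (\<tau> n)) * (ip (\<tau> n) x + ip (\<tau> n) y * sc (cnj c))"
      unfolding P_def by (simp add: ip_add1 ip_add2 ip_act ip_act2 st_sc)
    then show ?thesis by (simp only: prod_F)
  qed
  have sum4: "(\<lambda>n. sc 1 * P 1 n + sc (-1) * P (-1) n + sc \<i> * P \<i> n + sc (-\<i>) * P (-\<i>) n)
      sums (sc 1 * Q 1 + sc (-1) * Q (-1) + sc \<i> * Q \<i> + sc (-\<i>) * Q (-\<i>))"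
    by (intro sums_add s)
  have lhs: "sc 1 * P 1 n + sc (-1) * P (-1) n + sc \<i> * P \<i> n + sc (-\<i>) * P (-\<i>) n
      = 4 *\<^sub>R (ip x (\<tau> n) * ip (\<tau> n) y)" for n
    unfolding P_eq by (rule pol_alg)
  have rhs: "sc 1 * Q 1 + sc (-1) * Q (-1) + sc \<i> * Q \<i> + sc (-\<i>) * Q (-\<i>) = 4 *\<^sub>R ip x y"
    unfolding Q_def ip_F by (rule pol_alg)
  have "(\<lambda>n. 4 *\<^sub>R (ip x (\<tau> n) * ip (\<tau> n) y)) sums (4 *\<^sub>R ip x y)"
    using sum4 unfolding lhs rhs .
  then have "(\<lambda>n. of_real (1/4) * (4 *\<^sub>R (ip x (\<tau> n) * ip (\<tau> n) y))) sums (of_real (1/4) * (4 *\<^sub>R ip x y))"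
    by (rule sums_mult)
  then show ?thesis by (simp add: scaleR_conv_of_real[symmetric])
qed

lemma frame_expand:
  assumes fr: "modular_parseval_frame ip \<tau>" and fin: "finite S"
    and z: "\<And>n. n \<notin> S \<Longrightarrow> ip x (\<tau> n) = 0"
  shows "ip x y = (\<Sum>n\<in>S. ip x (\<tau> n) * ip (\<tau> n) y)"
proof -
  have "(\<lambda>n. ip x (\<tau> n) * ip (\<tau> n) y) sums (\<Sum>n\<in>S. ip x (\<tau> n) * ip (\<tau> n) y)"
    by (rule sums_finite[OF fin]) (simp add: z)
  with frame_pol[OF fr] show ?thesis using sums_unique2 by blast
qed

end


lemma ereal_amgm:
  fixes a b :: ereal
  assumes "0 \<le> a" "0 \<le> b"
  shows "a * b \<le> ((a + b) / 2) ^ 2"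
proof (cases a)
  case (real r)
  note ra = real
  show ?thesis
  proof (cases b)
    case (real q)
    have "r * q \<le> ((r + q) / 2) ^ 2"
    proof -
      have "0 \<le> (r - q)^2" by simp
      then show ?thesis by (simp add: power2_eq_square field_simps)
    qed
    then show ?thesis using ra real by (simp add: power2_eq_square)
  next
    case PInf
    then show ?thesis using ra assms by (simp add: power2_eq_square)
  next
    case MInf then show ?thesis using assms by simp
  qed
next
  case PInf
  then show ?thesis using assms
    by (cases b) (simp_all add: power2_eq_square)
next
  case MInf then show ?thesis using assms by simp
qed


context hmod
begin

lemma supp_nonempty:
  assumes fr: "modular_parseval_frame ip \<tau>" and x0: "x \<noteq> 0"
  shows "{n. ip x (\<tau> n) \<noteq> 0} \<noteq> {}"
proof
  assume e: "{n. ip x (\<tau> n) \<noteq> 0} = {}"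
  then have "\<And>n. ip x (\<tau> n) = 0" by blast
  then have "(\<lambda>n. ip x (\<tau> n) * ip (\<tau> n) x) = (\<lambda>n. 0)" by simp
  moreover have "(\<lambda>n. ip x (\<tau> n) * ip (\<tau> n) x) sums ip x x" using fr unfolding modular_parseval_frame_def by blast
  ultimately have "(\<lambda>n. 0) sums ip x x" by simp
  then have "ip x x = 0" using sums_zero sums_unique2 by blast
  then show False using ip_def0 x0 by blast
qed

lemma supp_card_ge1:
  assumes "{n. f n \<noteq> 0} \<noteq> {}"
  shows "supp_card f \<ge> 1"
proof (cases "finite {n. f n \<noteq> 0}")
  case True
  then have "card {n. f n \<noteq> 0} \<ge> 1" using assms by (simp add: Suc_le_eq card_gt_0_iff)
  then show ?thesis using True unfolding supp_card_def by simp
next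
  case False then show ?thesis unfolding supp_card_def by simp
qed

lemma main_hmod:
  assumes fr1: "modular_parseval_frame ip \<tau>" and fr2: "modular_parseval_frame ip \<omega>" and x0: "x \<noteq> 0"
  shows "((supp_card (analysis_op ip \<tau> x) + supp_card (analysis_op ip \<omega> x)) / 2) ^ 2
           \<ge> supp_card (analysis_op ip \<tau> x) * supp_card (analysis_op ip \<omega> x)
       \<and> supp_card (analysis_op ip \<tau> x) * supp_card (analysis_op ip \<omega> x)
           \<ge> ereal (1 / (SUP p \<in> (UNIV :: (nat \<times> nat) set). (norm (ip (\<tau> (fst p)) (\<omega> (snd p))))\<^sup>2))"
proof -
  define S where "S = {n. ip x (\<tau> n) \<noteq> 0}"
  define T where "T = {m. ip x (\<omega> m) \<noteq> 0}"
  have aS: "{n. analysis_op ip \<tau> x n \<noteq> 0} = S" unfolding S_def analysis_op_def by simp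
  have aT: "{n. analysis_op ip \<omega> x n \<noteq> 0} = T" unfolding T_def analysis_op_def by simp
  have Sne: "S \<noteq> {}" unfolding S_def by (rule supp_nonempty[OF fr1 x0])
  have Tne: "T \<noteq> {}" unfolding T_def by (rule supp_nonempty[OF fr2 x0])
  define a where "a = supp_card (analysis_op ip \<tau> x)"
  define b where "b = supp_card (analysis_op ip \<omega> x)"
  have a1: "a \<ge> 1" unfolding a_def by (rule supp_card_ge1) (use aS Sne in simp)
  have b1: "b \<ge> 1" unfolding b_def by (rule supp_card_ge1) (use aT Tne in simp)
  have part1: "a * b \<le> ((a + b) / 2) ^ 2"
  proof (rule ereal_amgm)
    have z: "(0::ereal) \<le> 1" by simp
    show "0 \<le> a" using z a1 by (rule order_trans)
    show "0 \<le> b" using z b1 by (rule order_trans)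
  qed
  define g where "g p = (norm (ip (\<tau> (fst p)) (\<omega> (snd p))))\<^sup>2" for p
  define M where "M = (SUP p \<in> (UNIV :: (nat \<times> nat) set). g p)"
  obtain C1 where C1: "\<And>n. nx (\<tau> n) \<le> C1" using frame_bounded[OF fr1] by blast
  obtain C2 where C2: "\<And>n. nx (\<omega> n) \<le> C2" using frame_bounded[OF fr2] by blast
  have gb: "g p \<le> (C1 * C2)^2" for p
  proof -
    have "norm (ip (\<tau> (fst p)) (\<omega> (snd p))) \<le> nx (\<tau> (fst p)) * nx (\<omega> (snd p))" by (rule cs)
    also have "\<dots> \<le> C1 * C2" using C1 C2 nx_ge0 by (intro mult_mono) (auto intro: order_trans)
    finally show ?thesis unfolding g_def by (intro power_mono) auto
  qed
  have bdd: "bdd_above (range g)" using gb by (intro bdd_aboveI) auto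
  have gM: "g p \<le> M" for p unfolding M_def by (rule cSUP_upper[OF _ bdd]) simp
  have M0: "M \<ge> 0" using gM[of "(0,0)"] unfolding g_def by (meson order_trans zero_le_power2)
  have gs: "norm (ip (\<tau> n) (\<omega> m)) \<le> sqrt M" for n m
    using gM[of "(n, m)"] unfolding g_def by (simp add: real_le_rsqrt)
  have part2: "ereal (1 / M) \<le> a * b"
  proof (cases "finite S \<and> finite T")
    case False
    have ai: "a = (if finite S then ereal (real (card S)) else \<infinity>)" unfolding a_def supp_card_def aS ..
    have bi: "b = (if finite T then ereal (real (card T)) else \<infinity>)" unfolding b_def supp_card_def aT ..
    have o: "(0::ereal) < 1" by simp
    have pa: "0 < a" by (rule order_less_le_trans[OF o a1])
    have pb: "0 < b" by (rule order_less_le_trans[OF o b1])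
    have "a * b = \<infinity>"
    proof (cases "finite S")
      case True
      then have "\<not> finite T" using False by simp
      then have "b = \<infinity>" using bi by simp
      then show ?thesis using pa by simp
    next
      case False
      then have "a = \<infinity>" using ai by simp
      then show ?thesis using pb by simp
    qed
    then show ?thesis by (subst \<open>a * b = \<infinity>\<close>) simp
  next
    case True
    then have fS: "finite S" and fT: "finite T" by auto
    have ab: "a * b = ereal (real (card S) * real (card T))"
      unfolding a_def b_def supp_card_def aS aT using fS fT by simp
    define \<alpha> where "\<alpha> n = norm (ip x (\<tau> n))" for n
    define \<beta> where "\<beta> m = norm (ip x (\<omega> m))" for m
    define A where "A = (\<Sum>n\<in>S. \<alpha> n)"
    define B where "B = (\<Sum>m\<in>T. \<beta> m)"
    have A0: "A > 0" unfolding A_def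
      by (rule sum_pos[OF fS Sne]) (simp add: \<alpha>_def S_def)
    have B0: "B \<ge> 0" unfolding B_def \<beta>_def by (simp add: sum_nonneg)
    have \<beta>le: "\<beta> m \<le> sqrt M * A" for m
    proof -
      have "ip x (\<omega> m) = (\<Sum>n\<in>S. ip x (\<tau> n) * ip (\<tau> n) (\<omega> m))"
        by (rule frame_expand[OF fr1 fS]) (simp add: S_def)
      then have "\<beta> m \<le> (\<Sum>n\<in>S. norm (ip x (\<tau> n) * ip (\<tau> n) (\<omega> m)))"
        unfolding \<beta>_def by (simp add: norm_sum)
      also have "\<dots> \<le> (\<Sum>n\<in>S. \<alpha> n * sqrt M)"
      proof (rule sum_mono)
        fix n assume "n \<in> S"
        have "norm (ip x (\<tau> n) * ip (\<tau> n) (\<omega> m)) \<le> \<alpha> n * norm (ip (\<tau> n) (\<omega> m))"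
          unfolding \<alpha>_def by (rule norm_mult_ineq)
        also have "\<dots> \<le> \<alpha> n * sqrt M" using gs by (intro mult_left_mono) (auto simp: \<alpha>_def)
        finally show "norm (ip x (\<tau> n) * ip (\<tau> n) (\<omega> m)) \<le> \<alpha> n * sqrt M" .
      qed
      also have "\<dots> = sqrt M * A" unfolding A_def by (simp add: sum_distrib_left mult.commute)
      finally show ?thesis .
    qed
    have \<alpha>le: "\<alpha> n \<le> sqrt M * B" for n
    proof -
      have "ip x (\<tau> n) = (\<Sum>m\<in>T. ip x (\<omega> m) * ip (\<omega> m) (\<tau> n))"
        by (rule frame_expand[OF fr2 fT]) (simp add: T_def)
      then have "\<alpha> n \<le> (\<Sum>m\<in>T. norm (ip x (\<omega> m) * ip (\<omega> m) (\<tau> n)))"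
        unfolding \<alpha>_def by (simp add: norm_sum)
      also have "\<dots> \<le> (\<Sum>m\<in>T. \<beta> m * sqrt M)"
      proof (rule sum_mono)
        fix m assume "m \<in> T"
        have "norm (ip x (\<omega> m) * ip (\<omega> m) (\<tau> n)) \<le> \<beta> m * norm (ip (\<omega> m) (\<tau> n))"
          unfolding \<beta>_def by (rule norm_mult_ineq)
        also have "norm (ip (\<omega> m) (\<tau> n)) = norm (ip (\<tau> n) (\<omega> m))" by (rule ip_norm_sym)
        also have "\<beta> m * norm (ip (\<tau> n) (\<omega> m)) \<le> \<beta> m * sqrt M" using gs by (intro mult_left_mono) (auto simp: \<beta>_def)
        finally show "norm (ip x (\<omega> m) * ip (\<omega> m) (\<tau> n)) \<le> \<beta> m * sqrt M" .
      qed
      also have "\<dots> = sqrt M * B" unfolding B_def by (simp add: sum_distrib_left mult.commute)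
      finally show ?thesis .
    qed
    have Ale: "A \<le> real (card S) * (sqrt M * B)" unfolding A_def
      by (rule sum_bounded_above) (rule \<alpha>le)
    have Ble: "B \<le> real (card T) * (sqrt M * A)" unfolding B_def
      by (rule sum_bounded_above) (rule \<beta>le)
    have "A \<le> real (card S) * sqrt M * B" using Ale by (simp add: mult.assoc)
    also have "\<dots> \<le> real (card S) * sqrt M * (real (card T) * (sqrt M * A))"
      using Ble M0 by (intro mult_left_mono) auto
    also have "\<dots> = (real (card S) * real (card T) * (sqrt M * sqrt M)) * A" by (simp add: mult_ac)
    also have "sqrt M * sqrt M = M" using M0 by simp
    finally have "1 * A \<le> (real (card S) * real (card T) * M) * A" by simp
    then have K1: "1 \<le> real (card S) * real (card T) * M" using A0 by (simp only: mult_le_cancel_right)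
    then have Mp: "M > 0" using M0 by (cases "M = 0") auto
    have "1 / M \<le> real (card S) * real (card T)" using K1 Mp by (simp add: divide_le_eq mult_ac)
    then show ?thesis unfolding ab by simp
  qed
  show ?thesis using part1 part2 unfolding a_def b_def M_def g_def by simp
qed

end


theorem mainTheorem1:
  fixes smul :: "complex \<Rightarrow> 'a::{real_normed_algebra_1,banach} \<Rightarrow> 'a"
    and star :: "'a \<Rightarrow> 'a"
    and act :: "'a \<Rightarrow> 'e::ab_group_add \<Rightarrow> 'e"
    and ip :: "'e \<Rightarrow> 'e \<Rightarrow> 'a"
    and \<tau> \<omega> :: "nat \<Rightarrow> 'e"
    and x :: 'e
  assumes "hilbert_cstar_module smul star act ip"
    and "modular_parseval_frame ip \<tau>"
    and "modular_parseval_frame ip \<omega>"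
    and "x \<noteq> 0"
  shows "((supp_card (analysis_op ip \<tau> x) + supp_card (analysis_op ip \<omega> x)) / 2) ^ 2
           \<ge> supp_card (analysis_op ip \<tau> x) * supp_card (analysis_op ip \<omega> x)
       \<and> supp_card (analysis_op ip \<tau> x) * supp_card (analysis_op ip \<omega> x)
           \<ge> ereal (1 / (SUP p \<in> (UNIV :: (nat \<times> nat) set). (norm (ip (\<tau> (fst p)) (\<omega> (snd p))))\<^sup>2))"
proof -
  have cs0: "cstar_algebra smul star" using assms(1) unfolding hilbert_cstar_module_def by (rule conjunct1)
  interpret hmod smul star act ip
    by (rule hmod.intro[OF cstar.intro[OF cs0] hmod_axioms.intro[OF assms(1)]])
  show ?thesis by (rule main_hmod[OF assms(2) assms(3) assms(4)])
qed

end
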